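(* Let $\Delta$ be a full-dimensional convex polyhedron of $\mathbb{R}^n$ with the induced structure of Euclidean polyhedral space, and set $U=\operatorname{relint}(\Delta)$. Let $\Pi$ be a polyhedral complex on $\Delta$ and $f$ a piecewise affine function on $\Delta$ defined on $\Pi$. Then $f$ is strictly concave on $\Pi|_U$ if and only if $f$ is concave in the usual sense and $\Pi=\Pi(f)$. In particular, $\Pi$ is regular on $U$ if and only if there is a concave piecewise affine function $f$ on $\Delta$ with $\Pi=\Pi(f)$.
   Context: Structure: $\Delta$ is quasi-embedded in the Euclidean space $\mathbb{R}^{n+1}$ (standard inner product) via $\iota(x)=(x,1)$; polyhedral complexes on $\Delta$ are finite families of convex polyhedra covering $\Delta$, closed under taking faces (including the empty face) and pairwise intersecting in common faces. $\tau\prec\sigma$ means $\tau$ is a face of $\sigma$. For a nonempty facet $\tau$ of $\sigma$, $v_{\sigma\setminus\tau}$ is the unit vector orthogonal to the affine span of $\iota(\tau)$, parallel to that of $\iota(\sigma)$, pointing towards $\sigma$. For $V\subset\Delta$ open, $\Pi|_V$ denotes the polyhedra meeting $V$, $\Pi|_V(k)$ those of dimension $k$. A $k$-dimensional weight $c\colon\Pi|_V(k)\to\mathbb{R}$ is positive if $c\ge0$, and a Minkowski weight if $\sum_{\sigma\in\Pi|_V(k),\sigma\succ\tau}c(\sigma)v_{\sigma\setminus\tau}=0$ for each $\tau\in\Pi|_V(k-1)$; $M^+_k(\Pi|_V)$ is the set of positive Minkowski weights. A function $f$ is piecewise affine defined on $\Pi$ if it is affine on each polyhedron of $\Pi$;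 writing $f=f_\sigma\circ\iota$ on $\sigma$ with $f_\sigma$ linear on $\mathbb{R}^{n+1}$, the product is $(f\cdot c)(\tau)=-\sum_{\sigma\in\Pi|_V(k),\sigma\succ\tau}c(\sigma)f_\sigma(v_{\sigma\setminus\tau})$. Strict concavity: $f$ is strictly concave on $\Pi|_U$ if it is defined on $\Pi$ and for every integer $k$, every $\tau\in\Pi|_U(k)$, every open $V\subset U$ with $V\cap\tau\neq\emptyset$ and every $c\in M^+_{k+1}(\Pi|_V)$ with $c(\sigma)>0$ for some $\sigma\in\Pi|_V(k+1)$ with $\sigma\succ\tau$, one has $(f\cdot c)(\tau)>0$. $\Pi$ is regular on $U$ if some piecewise affine function on $U$ is strictly concave on $\Pi|_U$. For a concave piecewise affine $f$ on $\Delta$, $\Pi(f)$ is the polyhedral complex on $\Delta$ consisting of the subsets $\sigma\subset\Delta$ for which there is an affine function $\ell$ on $\Delta$ with $f=\ell$ on $\sigma$ and $f<\ell$ on $\Delta\setminus\sigma$. *)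

theory Defs
  imports "HOL-Analysis.Analysis"
begin

definition iota :: "'a::euclidean_space \<Rightarrow> 'a \<times> real" where
  "iota x = (x, 1)"

definition polyhedral_complex :: "'a::euclidean_space set \<Rightarrow> 'a set set \<Rightarrow> bool" where
  "polyhedral_complex D PP \<longleftrightarrow>
     finite PP \<and>
     (\<forall>\<sigma>\<in>PP. polyhedron \<sigma> \<and> \<sigma> \<subseteq> D) \<and>
     \<Union>PP = D \<and>
     (\<forall>\<sigma>\<in>PP. \<forall>\<tau>. \<tau> face_of \<sigma> \<longrightarrow> \<tau> \<in> PP) \<and>
     (\<forall>\<sigma>\<in>PP. \<forall>\<tau>\<in>PP. (\<sigma> \<inter> \<tau>) face_of \<sigma> \<and> (\<sigma> \<inter> \<tau>) face_of \<tau>)"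

definition restr_dim :: "'a::euclidean_space set set \<Rightarrow> 'a set \<Rightarrow> int \<Rightarrow> 'a set set" where
  "restr_dim PP V k = {\<sigma>\<in>PP. \<sigma> \<inter> V \<noteq> {} \<and> aff_dim \<sigma> = k}"

definition restr :: "'a::euclidean_space set set \<Rightarrow> 'a set \<Rightarrow> 'a set set" where
  "restr PP V = {\<sigma>\<in>PP. \<sigma> \<inter> V \<noteq> {}}"

definition normal_vec :: "'a::euclidean_space set \<Rightarrow> 'a set \<Rightarrow> 'a \<times> real" where
  "normal_vec \<sigma> \<tau> = (SOME v. norm v = 1 \<and>
      (\<forall>p\<in>affine hull (iota ` \<tau>). \<forall>q\<in>affine hull (iota ` \<tau>). v \<bullet> (p - q) = 0) \<and>
      (\<forall>p\<in>affine hull (iota ` \<sigma>). p + v \<in> affine hull (iota ` \<sigma>)) \<and>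
      (\<forall>x\<in>\<tau>. \<forall>y\<in>\<sigma> - \<tau>. 0 < v \<bullet> (iota y - iota x)))"

definition pos_minkowski_weights ::
    "'a::euclidean_space set set \<Rightarrow> 'a set \<Rightarrow> int \<Rightarrow> ('a set \<Rightarrow> real) set" where
  "pos_minkowski_weights PP V k = {c.
      (\<forall>\<sigma>\<in>restr_dim PP V k. 0 \<le> c \<sigma>) \<and>
      (\<forall>\<tau>\<in>restr_dim PP V (k - 1).
         (\<Sum>\<sigma>\<in>{\<sigma>\<in>restr_dim PP V k. \<tau> face_of \<sigma>}. c \<sigma> *\<^sub>R normal_vec \<sigma> \<tau>) = 0)}"

definition defined_on :: "'a::euclidean_space set set \<Rightarrow> ('a \<Rightarrow> real) \<Rightarrow> bool" where
  "defined_on PP f \<longleftrightarrow> (\<forall>\<sigma>\<in>PP. \<exists>a b. \<forall>x\<in>\<sigma>. f x = a \<bullet> x + b)"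

definition piecewise_affine :: "'a::euclidean_space set \<Rightarrow> ('a \<Rightarrow> real) \<Rightarrow> bool" where
  "piecewise_affine D f \<longleftrightarrow> (\<exists>PP. polyhedral_complex D PP \<and> defined_on PP f)"

definition lin_part :: "('a::euclidean_space \<Rightarrow> real) \<Rightarrow> 'a set \<Rightarrow> ('a \<times> real \<Rightarrow> real)" where
  "lin_part f \<sigma> = (SOME g. linear g \<and> (\<forall>x\<in>\<sigma>. f x = g (iota x)))"

definition weight_prod ::
    "'a::euclidean_space set set \<Rightarrow> 'a set \<Rightarrow> int \<Rightarrow> ('a \<Rightarrow> real) \<Rightarrow> ('a set \<Rightarrow> real) \<Rightarrow> 'a set \<Rightarrow> real" where
  "weight_prod PP V k f c \<tau> =
     - (\<Sum>\<sigma>\<in>{\<sigma>\<in>restr_dim PP V k. \<tau> face_of \<sigma>}. c \<sigma> * lin_part f \<sigma> (normal_vec \<sigma> \<tau>))"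

definition strictly_concave :: "'a::euclidean_space set set \<Rightarrow> 'a set \<Rightarrow> ('a \<Rightarrow> real) \<Rightarrow> bool" where
  "strictly_concave PP U f \<longleftrightarrow> defined_on PP f \<and>
     (\<forall>k::int. \<forall>\<tau>\<in>restr_dim PP U k. \<forall>V. open V \<and> V \<subseteq> U \<and> V \<inter> \<tau> \<noteq> {} \<longrightarrow>
        (\<forall>c\<in>pos_minkowski_weights PP V (k + 1).
           (\<exists>\<sigma>\<in>restr_dim PP V (k + 1). \<tau> face_of \<sigma> \<and> 0 < c \<sigma>) \<longrightarrow>
           0 < weight_prod PP V (k + 1) f c \<tau>))"

definition regular_on :: "'a::euclidean_space set set \<Rightarrow> 'a set \<Rightarrow> bool" where
  "regular_on PP U \<longleftrightarrow> (\<exists>f. strictly_concave PP U f)"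

definition complex_of :: "'a::euclidean_space set \<Rightarrow> ('a \<Rightarrow> real) \<Rightarrow> 'a set set" where
  "complex_of D f = {\<sigma>. \<sigma> \<subseteq> D \<and> (\<exists>a b. (\<forall>x\<in>\<sigma>. f x = a \<bullet> x + b) \<and>
                                      (\<forall>x\<in>D - \<sigma>. f x < a \<bullet> x + b))}"

end

theory Submission
  imports Defs
begin

lemma iota_aff: "affine hull (iota ` S) = iota ` (affine hull (S::'a::euclidean_space set))"
proof -
  have e: "iota ` S = (\<lambda>x. (0,1) + x) ` ((\<lambda>x. (x,0::real)) ` S)" for S :: "'a set"
    by (auto simp: iota_def image_image)
  have bl: "bounded_linear (\<lambda>x::'a. (x,0::real))"
    by (simp add: bounded_linear_Pair)
  show ?thesis
    unfolding e affine_hull_translation affine_hull_linear_image[OF bl, symmetric] by simp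
qed

lemma orth_span:
  fixes w :: "'a::euclidean_space"
  assumes "\<forall>m\<in>M. w \<bullet> m = 0" "y \<in> span M"
  shows "w \<bullet> y = 0"
  using orthogonal_to_span[OF assms(2), of w] assms(1) by (auto simp: orthogonal_def)

lemma codim1_decomp:
  fixes M L :: "'a::euclidean_space set"
  assumes L: "subspace L" and hML: "M \<subseteq> L" and dim: "dim L = dim M + 1"
    and w: "w \<in> L" "w \<noteq> 0" "\<forall>m\<in>M. w \<bullet> m = 0" and u: "u \<in> L"
  shows "u - ((w \<bullet> u) / (w \<bullet> w)) *\<^sub>R w \<in> span M"
proof -
  define q where "q = u - ((w \<bullet> u) / (w \<bullet> w)) *\<^sub>R w"
  have qL: "q \<in> L" unfolding q_def using L w u by (simp add: subspace_diff subspace_scale)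
  have wq: "w \<bullet> q = 0" using w(2) by (simp add: q_def inner_diff_right)
  obtain y z where y: "y \<in> span M" and z: "\<And>v. v \<in> span M \<Longrightarrow> orthogonal z v" and qyz: "q = y + z"
    using orthogonal_subspace_decomp_exists[of M q] by metis
  have spanML: "span M \<subseteq> L" using L hML by (simp add: span_minimal)
  show ?thesis
  proof (cases "z = 0")
    case True then show ?thesis using y qyz q_def by simp
  next
    case False
    have zL: "z \<in> L" using qL y spanML qyz L by (metis add_diff_cancel_left' subsetD subspace_diff)
    have wy: "w \<bullet> y = 0" using orth_span[OF w(3) y] .
    have wz: "w \<bullet> z = 0" using wq wy qyz by (simp add: inner_add_right)
    have wnot: "w \<notin> span M"
      using orth_span[OF w(3)] w(2) by (metis inner_eq_zero_iff)
    have zorth: "\<forall>m\<in>insert w M. z \<bullet> m = 0"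
      using wz z by (auto simp: orthogonal_def inner_commute span_base)
    have znot: "z \<notin> span (insert w M)"
      using orth_span[OF zorth] False by (metis inner_eq_zero_iff)
    have "dim (insert z (insert w M)) = dim M + 2"
      using znot wnot by (simp add: dim_insert)
    moreover have "dim (insert z (insert w M)) \<le> dim L"
      using zL w(1) hML by (intro dim_subset) auto
    ultimately show ?thesis using dim by simp
  qed
qed

lemma exists_normal:
  fixes M L :: "'a::euclidean_space set"
  assumes L: "subspace L" and hML: "M \<subseteq> L" and dim: "dim L = dim M + 1"
  obtains w where "w \<in> L" "norm w = 1" "\<forall>m\<in>span M. w \<bullet> m = 0"
proof -
  have "\<not> L \<subseteq> span M"
  proof
    assume "L \<subseteq> span M"
    then have "dim L \<le> dim M" using dim_subset[of L "span M"] by simp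
    then show False using dim by simp
  qed
  then obtain u0 where u0: "u0 \<in> L" "u0 \<notin> span M" by blast
  obtain y z where y: "y \<in> span M" and z: "\<And>v. v \<in> span M \<Longrightarrow> orthogonal z v" and qyz: "u0 = y + z"
    using orthogonal_subspace_decomp_exists[of M u0] by metis
  have spanML: "span M \<subseteq> L" using L hML by (simp add: span_minimal)
  have zL: "z \<in> L" using u0 y spanML qyz L by (metis add_diff_cancel_left' subsetD subspace_diff)
  have z0: "z \<noteq> 0" using u0 y qyz by auto
  show ?thesis
    apply (rule that[of "z /\<^sub>R norm z"])
    using zL L z0 z by (auto simp: subspace_scale orthogonal_def)
qed

lemma lp_props:
  assumes "\<forall>x\<in>\<sigma>. f x = a \<bullet> x + b"
  shows "linear (lin_part f \<sigma>) \<and> (\<forall>x\<in>\<sigma>. f x = lin_part f \<sigma> (iota x))"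
proof -
  let ?g = "\<lambda>(u::'a::euclidean_space, s::real). a \<bullet> u + b * s"
  have "linear ?g"
    by (rule linearI) (auto simp: inner_add_right algebra_simps)
  moreover have "\<forall>x\<in>\<sigma>. f x = ?g (iota x)" using assms by (simp add: iota_def)
  ultimately have "\<exists>g. linear g \<and> (\<forall>x\<in>\<sigma>. f x = g (iota x))" by blast
  then show ?thesis unfolding lin_part_def by (rule someI_ex)
qed

lemma lin_iota_diff:
  assumes "linear F"
  shows "F (iota y) - F (iota x) = F (y - x, 0)"
proof -
  have "F (iota y) - F (iota x) = F (iota y - iota x)" using linear_diff[OF assms] by simp
  also have "iota y - iota x = (y - x, 0)" by (simp add: iota_def)
  finally show ?thesis .
qed

lemma aff_hull_iota_mem:
  "p \<in> affine hull (iota ` S) \<longleftrightarrow> snd p = 1 \<and> fst p \<in> affine hull S"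
proof -
  have "p \<in> iota ` (affine hull S) \<longleftrightarrow> snd p = 1 \<and> fst p \<in> affine hull S"
    by (cases p) (auto simp: iota_def image_iff)
  then show ?thesis by (simp add: iota_aff)
qed

lemma nv_props:
  fixes \<sigma> \<tau> :: "'a::euclidean_space set"
  assumes poly: "polyhedron \<sigma>" and face: "\<tau> face_of \<sigma>" and x0: "x0 \<in> \<tau>"
    and dimeq: "aff_dim \<sigma> = aff_dim \<tau> + 1"
  shows "\<exists>w. normal_vec \<sigma> \<tau> = (w,0) \<and> norm w = 1 \<and> w \<in> span ((+) (- x0) ` \<sigma>)
           \<and> (\<forall>m\<in>span ((+) (- x0) ` \<tau>). w \<bullet> m = 0) \<and> (\<forall>x\<in>\<tau>. \<forall>y\<in>\<sigma> - \<tau>. 0 < w \<bullet> (y - x))"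
proof -
  define L where "L = span ((+) (- x0) ` \<sigma>)"
  define M where "M = (+) (- x0) ` \<tau>"
  have ts: "\<tau> \<subseteq> \<sigma>" using face face_of_imp_subset by blast
  have x0s: "x0 \<in> \<sigma>" using ts x0 by blast
  have subL: "subspace L" by (simp add: L_def)
  have hML: "M \<subseteq> L" unfolding L_def M_def using ts by (auto intro: span_base)
  have ahs: "x0 \<in> affine hull \<sigma>" "x0 \<in> affine hull \<tau>" using x0 x0s by (auto intro: hull_inc)
  have "dim L = dim M + 1"
    using dimeq aff_dim_eq_dim[OF ahs(1)] aff_dim_eq_dim[OF ahs(2)] unfolding L_def M_def dim_span by linarith
  note dimL = this
  obtain n0 where n0: "n0 \<in> L" "norm n0 = 1" "\<forall>m\<in>span M. n0 \<bullet> m = 0"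
    using exists_normal[OF subL hML dimL] by metis
  have n0M: "\<forall>m\<in>M. n0 \<bullet> m = 0" using n0(3) span_base by blast
  have n00: "n0 \<noteq> 0" using n0(2) by auto
  have nn: "n0 \<bullet> n0 = 1" using n0(2) by (simp add: norm_eq_1)
  have "\<tau> exposed_face_of \<sigma>" using exposed_face_of_polyhedron[OF poly] face by blast
  then obtain a b where ab: "\<sigma> \<subseteq> {x. a \<bullet> x \<le> b}" "\<tau> = \<sigma> \<inter> {x. a \<bullet> x = b}"
    unfolding exposed_face_of_def by blast
  have aM: "\<forall>m\<in>M. a \<bullet> m = 0"
  proof
    fix m assume "m \<in> M"
    then obtain x where "x \<in> \<tau>" "m = - x0 + x" unfolding M_def by blast
    then show "a \<bullet> m = 0" using ab(2) x0 by (auto simp: inner_add_right inner_diff_right)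
  qed
  have key: "(n0 \<bullet> (y - x0)) * (a \<bullet> n0) < 0" if y: "y \<in> \<sigma> - \<tau>" for y
  proof -
    have uL: "- x0 + y \<in> L" unfolding L_def using y by (auto intro: span_base)
    have "(- x0 + y) - (n0 \<bullet> (- x0 + y)) *\<^sub>R n0 \<in> span M"
      using codim1_decomp[OF subL hML dimL n0(1) n00 n0M uL] nn by simp
    then have "a \<bullet> ((- x0 + y) - (n0 \<bullet> (- x0 + y)) *\<^sub>R n0) = 0" using orth_span[OF aM] by blast
    then have "a \<bullet> (- x0 + y) = (n0 \<bullet> (- x0 + y)) * (a \<bullet> n0)" by (simp add: inner_diff_right)
    moreover have "a \<bullet> y < b" using y ab by auto
    moreover have "a \<bullet> x0 = b" using x0 ab by auto
    ultimately show ?thesis by (simp add: inner_add_right algebra_simps)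
  qed
  define w where "w = (if a \<bullet> n0 > 0 then - n0 else n0)"
  have wL: "w \<in> L" using n0(1) subL by (simp add: w_def subspace_neg)
  have wn: "norm w = 1" using n0(2) by (simp add: w_def)
  have wM: "\<forall>m\<in>span M. w \<bullet> m = 0" using n0(3) by (simp add: w_def)
  have wpos: "0 < w \<bullet> (y - x)" if "x \<in> \<tau>" "y \<in> \<sigma> - \<tau>" for x y
  proof -
    have "- x0 + x \<in> span M" unfolding M_def using that(1) by (auto intro: span_base)
    then have h1: "w \<bullet> (- x0 + x) = 0" using wM by blast
    have "y - x = (y - x0) - (- x0 + x)" by simp
    then have "w \<bullet> (y - x) = w \<bullet> (y - x0)" using h1 by (simp add: inner_diff_right)
    moreover have "0 < w \<bullet> (y - x0)"
      using key[OF that(2)] by (auto simp: w_def mult_less_0_iff)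
    ultimately show ?thesis by simp
  qed
  define P where "P = (\<lambda>v. norm v = 1 \<and>
      (\<forall>p\<in>affine hull (iota ` \<tau>). \<forall>q\<in>affine hull (iota ` \<tau>). v \<bullet> (p - q) = 0) \<and>
      (\<forall>p\<in>affine hull (iota ` \<sigma>). p + v \<in> affine hull (iota ` \<sigma>)) \<and>
      (\<forall>x\<in>\<tau>. \<forall>y\<in>\<sigma> - \<tau>. 0 < v \<bullet> (iota y - iota x)))"
  have ahs_eq: "affine hull \<sigma> = (\<lambda>x. x0 + x) ` L"
    unfolding L_def using affine_hull_span_gen[OF ahs(1)] by simp
  have aht_eq: "affine hull \<tau> = (\<lambda>x. x0 + x) ` span M"
    unfolding M_def using affine_hull_span_gen[OF ahs(2)] by simp
  have "P (w, 0)"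
    unfolding P_def
  proof (intro conjI ballI)
    show "norm (w, 0::real) = 1" using wn by (simp add: norm_prod_def)
  next
    fix p q assume "p \<in> affine hull (iota ` \<tau>)" "q \<in> affine hull (iota ` \<tau>)"
    then obtain mp mq where "mp \<in> span M" "mq \<in> span M" "fst p = x0 + mp" "fst q = x0 + mq"
      "snd p = 1" "snd q = 1"
      unfolding aff_hull_iota_mem aht_eq by auto
    moreover have "w \<bullet> (mp - mq) = 0" using wM calculation(1,2) by (simp add: span_diff)
    ultimately show "(w, 0) \<bullet> (p - q) = 0"
      by (cases p, cases q) (simp add: inner_diff_right)
  next
    fix p assume "p \<in> affine hull (iota ` \<sigma>)"
    then obtain l where "l \<in> L" "fst p = x0 + l" "snd p = 1"
      unfolding aff_hull_iota_mem ahs_eq by auto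
    moreover have "l + w \<in> L" using calculation(1) wL subL by (simp add: subspace_add)
    ultimately show "p + (w, 0) \<in> affine hull (iota ` \<sigma>)"
      unfolding aff_hull_iota_mem ahs_eq by (cases p) (auto simp: add.assoc)
  next
    fix x y assume "x \<in> \<tau>" "y \<in> \<sigma> - \<tau>"
    then show "0 < (w, 0) \<bullet> (iota y - iota x)" using wpos by (simp add: iota_def)
  qed
  then have Pv: "P (normal_vec \<sigma> \<tau>)"
    unfolding normal_vec_def P_def[symmetric] by (rule someI)
  obtain v1 v2 where v: "normal_vec \<sigma> \<tau> = (v1, v2)" by (cases "normal_vec \<sigma> \<tau>")
  have "iota x0 + (v1, v2) \<in> affine hull (iota ` \<sigma>)"
  proof -
    have "iota x0 \<in> affine hull (iota ` \<sigma>)" using x0s by (auto intro: hull_inc)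
    then show ?thesis using Pv v unfolding P_def by metis
  qed
  then have v2: "v2 = 0" and "x0 + v1 \<in> affine hull \<sigma>"
    unfolding aff_hull_iota_mem by (auto simp: iota_def)
  then have v1L: "v1 \<in> L" unfolding ahs_eq by auto
  have v1M: "\<forall>m\<in>span M. v1 \<bullet> m = 0"
  proof (rule ballI, rule orth_span[of M v1])
    show "\<forall>m\<in>M. v1 \<bullet> m = 0"
    proof
      fix m assume "m \<in> M"
      then obtain x where x: "x \<in> \<tau>" "m = - x0 + x" unfolding M_def by blast
      have "iota x \<in> affine hull (iota ` \<tau>)" "iota x0 \<in> affine hull (iota ` \<tau>)"
        using x x0 by (auto intro: hull_inc)
      then have "(v1, v2) \<bullet> (iota x - iota x0) = 0" using Pv v unfolding P_def by metis
      then show "v1 \<bullet> m = 0" using x v2 by (simp add: iota_def)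
    qed
  qed
  have v1n: "norm v1 = 1" using Pv v v2 unfolding P_def by (simp add: norm_prod_def)
  have v1p: "\<forall>x\<in>\<tau>. \<forall>y\<in>\<sigma> - \<tau>. 0 < v1 \<bullet> (y - x)"
    using Pv v v2 unfolding P_def by (simp add: iota_def)
  show ?thesis
    using v v2 v1n v1L v1M v1p unfolding L_def M_def by blast
qed

lemma face_decomp:
  fixes \<sigma> \<tau> :: "'a::euclidean_space set"
  assumes face: "\<tau> face_of \<sigma>" and x0: "x0 \<in> \<tau>"
    and dimeq: "aff_dim \<sigma> = aff_dim \<tau> + 1"
    and w: "w \<in> span ((+) (- x0) ` \<sigma>)" "norm w = 1" "\<forall>m\<in>span ((+) (- x0) ` \<tau>). w \<bullet> m = 0"
    and u: "u \<in> span ((+) (- x0) ` \<sigma>)"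
  shows "u - (w \<bullet> u) *\<^sub>R w \<in> span ((+) (- x0) ` \<tau>)"
proof -
  define L where "L = span ((+) (- x0) ` \<sigma>)"
  define M where "M = (+) (- x0) ` \<tau>"
  have ts: "\<tau> \<subseteq> \<sigma>" using face face_of_imp_subset by blast
  have x0s: "x0 \<in> \<sigma>" using ts x0 by blast
  have subL: "subspace L" by (simp add: L_def)
  have hML: "M \<subseteq> L" unfolding L_def M_def using ts by (auto intro: span_base)
  have ahs: "x0 \<in> affine hull \<sigma>" "x0 \<in> affine hull \<tau>" using x0 x0s by (auto intro: hull_inc)
  have dimL: "dim L = dim M + 1"
    using dimeq aff_dim_eq_dim[OF ahs(1)] aff_dim_eq_dim[OF ahs(2)] unfolding L_def M_def dim_span by linarith
  have w0: "w \<noteq> 0" using w(2) by auto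
  have ww: "w \<bullet> w = 1" using w(2) by (simp add: norm_eq_1)
  have wM: "\<forall>m\<in>M. w \<bullet> m = 0" using w(3) span_base unfolding M_def by blast
  show ?thesis
    using codim1_decomp[OF subL hML dimL w(1)[folded L_def] w0 wM u[folded L_def]] ww
    unfolding M_def by simp
qed

lemma backward:
  fixes D :: "'a::euclidean_space set"
  assumes PPc: "polyhedral_complex D PP" and def: "defined_on PP f" and eq: "PP = complex_of D f"
  shows "strictly_concave PP U f"
  unfolding strictly_concave_def
proof (intro conjI allI ballI impI)
  show "defined_on PP f" by fact
next
  fix k :: int and \<tau> V c
  assume tU: "\<tau> \<in> restr_dim PP U k" and V: "open V \<and> V \<subseteq> U \<and> V \<inter> \<tau> \<noteq> {}"
    and c: "c \<in> pos_minkowski_weights PP V (k + 1)"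
    and ex: "\<exists>\<sigma>\<in>restr_dim PP V (k + 1). \<tau> face_of \<sigma> \<and> 0 < c \<sigma>"
  have tPP: "\<tau> \<in> PP" and tdim: "aff_dim \<tau> = k" using tU by (auto simp: restr_dim_def)
  then have "\<tau> \<in> complex_of D f" using eq by simp
  then obtain a b where ab1: "\<forall>x\<in>\<tau>. f x = a \<bullet> x + b" and ab2: "\<forall>x\<in>D - \<tau>. f x < a \<bullet> x + b"
    unfolding complex_of_def by blast
  obtain x0 where x0: "x0 \<in> V" "x0 \<in> \<tau>" using V by blast
  have tV: "\<tau> \<in> restr_dim PP V k" using tPP tdim x0 by (auto simp: restr_dim_def)
  define S where "S = {\<sigma>\<in>restr_dim PP V (k + 1). \<tau> face_of \<sigma>}"
  have finS: "finite S"
    using PPc unfolding S_def restr_dim_def polyhedral_complex_def by auto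
  have mink: "(\<Sum>\<sigma>\<in>S. c \<sigma> *\<^sub>R normal_vec \<sigma> \<tau>) = 0"
    using c tV unfolding pos_minkowski_weights_def S_def by auto
  have cpos: "\<forall>\<sigma>\<in>S. 0 \<le> c \<sigma>"
    using c unfolding pos_minkowski_weights_def S_def by auto
  define Lf where "Lf = (\<lambda>(u::'a, s::real). a \<bullet> u + b * s)"
  have linLf: "linear Lf" unfolding Lf_def
    by (rule linearI) (auto simp: inner_add_right algebra_simps)
  have Lsum: "(\<Sum>\<sigma>\<in>S. c \<sigma> * Lf (normal_vec \<sigma> \<tau>)) = 0"
  proof -
    have "Lf (\<Sum>\<sigma>\<in>S. c \<sigma> *\<^sub>R normal_vec \<sigma> \<tau>) = (\<Sum>\<sigma>\<in>S. c \<sigma> * Lf (normal_vec \<sigma> \<tau>))"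
      using linear_sum[OF linLf, of "\<lambda>\<sigma>. c \<sigma> *\<^sub>R normal_vec \<sigma> \<tau>" S] linear_scale[OF linLf] by simp
    then show ?thesis using mink linear_0[OF linLf] by simp
  qed
  have Gneg: "lin_part f \<sigma> (normal_vec \<sigma> \<tau>) - Lf (normal_vec \<sigma> \<tau>) < 0" if sS: "\<sigma> \<in> S" for \<sigma>
  proof -
    have sPP: "\<sigma> \<in> PP" and sdim: "aff_dim \<sigma> = k + 1" and face: "\<tau> face_of \<sigma>"
      using sS by (auto simp: S_def restr_dim_def)
    have poly: "polyhedron \<sigma>" and sD: "\<sigma> \<subseteq> D" using sPP PPc unfolding polyhedral_complex_def by auto
    have dimeq: "aff_dim \<sigma> = aff_dim \<tau> + 1" using sdim tdim by simp
    obtain w where w: "normal_vec \<sigma> \<tau> = (w,0)" "norm w = 1" "w \<in> span ((+) (- x0) ` \<sigma>)"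
      "\<forall>m\<in>span ((+) (- x0) ` \<tau>). w \<bullet> m = 0" "\<forall>x\<in>\<tau>. \<forall>y\<in>\<sigma> - \<tau>. 0 < w \<bullet> (y - x)"
      using nv_props[OF poly face x0(2) dimeq] by blast
    obtain a' b' where "\<forall>x\<in>\<sigma>. f x = a' \<bullet> x + b'" using def sPP unfolding defined_on_def by blast
    then have lp: "linear (lin_part f \<sigma>)" "\<forall>x\<in>\<sigma>. f x = lin_part f \<sigma> (iota x)"
      using lp_props by blast+
    define F where "F = lin_part f \<sigma>"
    define H where "H = (\<lambda>u. F (u, 0) - a \<bullet> u)"
    have linH: "linear H"
    proof (rule linearI)
      fix x y
      have "F (x + y, 0) = F ((x,0) + (y,0))" by simp
      also have "\<dots> = F (x,0) + F (y,0)" using linear_add[OF lp(1)] unfolding F_def by blast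
      finally show "H (x + y) = H x + H y" by (simp add: H_def inner_add_right)
    next
      fix r :: real and x
      have "F (r *\<^sub>R x, 0) = F (r *\<^sub>R (x,0))" by simp
      also have "\<dots> = r * F (x,0)" using linear_scale[OF lp(1), of r "(x,0)"] unfolding F_def by simp
      finally show "H (r *\<^sub>R x) = r *\<^sub>R H x" by (simp add: H_def algebra_simps)
    qed
    have ts: "\<tau> \<subseteq> \<sigma>" using face face_of_imp_subset by blast
    have H0: "H m = 0" if mt: "m \<in> (+) (- x0) ` \<tau>" for m
    proof -
      obtain x where x: "x \<in> \<tau>" "m = - x0 + x" using mt by blast
      have "F (x - x0, 0) = F (iota x) - F (iota x0)" using lin_iota_diff[OF lp(1)] unfolding F_def by simp
      also have "\<dots> = f x - f x0" using lp(2) ts x(1) x0(2) unfolding F_def by (metis subsetD)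
      also have "\<dots> = a \<bullet> (x - x0)" using ab1 x x0 by (simp add: inner_diff_right)
      finally show ?thesis using x by (simp add: H_def)
    qed
    have Hspan: "H m = 0" if "m \<in> span ((+) (- x0) ` \<tau>)" for m
      using linear_eq_0_on_span[OF linH] H0 that by blast
    have "\<sigma> \<noteq> \<tau>" using dimeq by auto
    then obtain y where y: "y \<in> \<sigma>" "y \<notin> \<tau>" using ts by blast
    have uL: "- x0 + y \<in> span ((+) (- x0) ` \<sigma>)" using y by (auto intro: span_base)
    have dec: "(- x0 + y) - (w \<bullet> (- x0 + y)) *\<^sub>R w \<in> span ((+) (- x0) ` \<tau>)"
      using face_decomp[OF face x0(2) dimeq w(3) w(2) w(4) uL] .
    have "H (- x0 + y) = H ((- x0 + y) - (w \<bullet> (- x0 + y)) *\<^sub>R w) + (w \<bullet> (- x0 + y)) * H w"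
      using linear_diff[OF linH] linear_scale[OF linH] by simp
    then have eqH: "H (- x0 + y) = (w \<bullet> (- x0 + y)) * H w" using Hspan[OF dec] by simp
    have "H (- x0 + y) = F (y - x0, 0) - a \<bullet> (y - x0)" by (simp add: H_def)
    also have "F (y - x0, 0) = f y - f x0"
      using lin_iota_diff[OF lp(1), of y x0] lp(2) y ts x0 unfolding F_def by auto
    finally have "H (- x0 + y) = f y - (a \<bullet> y + b)" using ab1 x0 by (simp add: inner_diff_right)
    moreover have "f y < a \<bullet> y + b" using ab2 y sD by auto
    ultimately have "H (- x0 + y) < 0" by simp
    moreover have "0 < w \<bullet> (- x0 + y)" using w(5) x0 y by simp
    ultimately have "H w < 0" using eqH by (simp add: mult_less_0_iff)
    then show ?thesis using w(1) by (simp add: H_def Lf_def F_def)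
  qed
  obtain \<sigma>0 where s0: "\<sigma>0 \<in> S" "0 < c \<sigma>0" using ex unfolding S_def by blast
  have "0 < (\<Sum>\<sigma>\<in>S. c \<sigma> * (Lf (normal_vec \<sigma> \<tau>) - lin_part f \<sigma> (normal_vec \<sigma> \<tau>)))"
  proof (rule sum_pos2[OF finS s0(1)])
    show "0 < c \<sigma>0 * (Lf (normal_vec \<sigma>0 \<tau>) - lin_part f \<sigma>0 (normal_vec \<sigma>0 \<tau>))"
      using s0 Gneg[OF s0(1)] by simp
    show "0 \<le> c \<sigma> * (Lf (normal_vec \<sigma> \<tau>) - lin_part f \<sigma> (normal_vec \<sigma> \<tau>))" if "\<sigma> \<in> S" for \<sigma>
      using cpos that Gneg[OF that] by simp
  qed
  also have "\<dots> = (\<Sum>\<sigma>\<in>S. c \<sigma> * Lf (normal_vec \<sigma> \<tau>)) - (\<Sum>\<sigma>\<in>S. c \<sigma> * lin_part f \<sigma> (normal_vec \<sigma> \<tau>))"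
    by (simp add: right_diff_distrib sum_subtractf)
  finally show "0 < weight_prod PP V (k + 1) f c \<tau>"
    using Lsum unfolding weight_prod_def S_def by simp
qed

lemma negl_low:
  fixes S :: "'a::euclidean_space set"
  assumes "aff_dim S < int DIM('a)"
  shows "negligible (affine hull S)"
proof (cases "S = {}")
  case True then show ?thesis by simp
next
  case False
  then obtain a where a: "a \<in> S" by blast
  then have ah: "a \<in> affine hull S" by (rule hull_inc)
  have "dim ((+) (- a) ` S) < DIM('a)" using aff_dim_eq_dim[OF ah] assms by simp
  then have "negligible (span ((+) (- a) ` S))" by (intro negligible_lowdim) simp
  then show ?thesis unfolding affine_hull_span_gen[OF ah] by (rule negligible_translation)
qed

lemma full_interior:
  fixes S :: "'a::euclidean_space set"
  assumes "convex S" "aff_dim S = int DIM('a)"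
  shows "interior S \<noteq> {}" "rel_interior S = interior S"
proof -
  have ah: "affine hull S = UNIV" using assms(2) aff_dim_eq_full by blast
  then show ri: "rel_interior S = interior S" by (rule rel_interior_interior)
  have "S \<noteq> {}" using assms(2) by auto
  then have "rel_interior S \<noteq> {}" using rel_interior_eq_empty assms(1) by blast
  then show "interior S \<noteq> {}" using ri by simp
qed

lemma sum_two:
  fixes g :: "'b \<Rightarrow> 'c::comm_monoid_add"
  assumes "finite S" "a \<in> S" "b \<in> S" "a \<noteq> b"
  shows "(\<Sum>x\<in>S. if x = a \<or> x = b then g x else 0) = g a + g b"
proof -
  have "(\<Sum>x\<in>S. if x = a \<or> x = b then g x else 0) = (\<Sum>x\<in>{x\<in>S. x = a \<or> x = b}. g x)"
    using assms(1) by (simp add: sum.inter_filter)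
  also have "{x\<in>S. x = a \<or> x = b} = {a, b}" using assms by auto
  finally show ?thesis using assms(4) by simp
qed

locale fwd =
  fixes D :: "'a::euclidean_space set" and PP :: "'a set set" and f :: "'a \<Rightarrow> real"
  assumes polyD: "polyhedron D" and fullD: "aff_dim D = int DIM('a)"
    and PPc: "polyhedral_complex D PP" and def: "defined_on PP f"
    and sc: "strictly_concave PP (rel_interior D) f"
begin

lemma finPP: "finite PP" using PPc by (simp add: polyhedral_complex_def)

lemma cell: assumes "\<rho> \<in> PP" shows "polyhedron \<rho>" "\<rho> \<subseteq> D" "closed \<rho>" "convex \<rho>"
  using assms PPc polyhedron_imp_closed polyhedron_imp_convex
  unfolding polyhedral_complex_def by blast+

lemma coverD: "\<Union>PP = D" using PPc by (simp add: polyhedral_complex_def)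

lemma int_cell: assumes "\<rho> \<in> PP" "\<rho>' \<in> PP"
  shows "\<rho> \<inter> \<rho>' \<in> PP" "(\<rho> \<inter> \<rho>') face_of \<rho>" "(\<rho> \<inter> \<rho>') face_of \<rho>'"
  using assms PPc unfolding polyhedral_complex_def by blast+

lemma face_cell: assumes "\<rho> \<in> PP" "\<tau> face_of \<rho>" shows "\<tau> \<in> PP"
  using assms PPc unfolding polyhedral_complex_def by blast

lemma lin_cell: assumes "\<rho> \<in> PP"
  shows "linear (lin_part f \<rho>)" "\<forall>x\<in>\<rho>. f x = lin_part f \<rho> (iota x)"
proof -
  obtain a b where "\<forall>x\<in>\<rho>. f x = a \<bullet> x + b" using def assms unfolding defined_on_def by blast
  then show "linear (lin_part f \<rho>)" "\<forall>x\<in>\<rho>. f x = lin_part f \<rho> (iota x)" using lp_props by blast+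
qed

lemma convD: "convex D" using polyD polyhedron_imp_convex by blast
lemma closedD: "closed D" using polyD polyhedron_imp_closed by blast
lemma intD: "interior D \<noteq> {}" "rel_interior D = interior D"
  using full_interior[OF convD fullD] by auto

lemma dist_ncells:
  assumes "\<rho> \<in> PP" "\<rho>' \<in> PP" "aff_dim \<rho> = int DIM('a)" "aff_dim \<rho>' = int DIM('a)" "\<rho> \<noteq> \<rho>'"
  shows "aff_dim (\<rho> \<inter> \<rho>') < int DIM('a)"
proof (cases "\<rho> \<inter> \<rho>' = \<rho>")
  case False
  then show ?thesis using face_of_aff_dim_lt[OF cell(4)[OF assms(1)] int_cell(2)[OF assms(1,2)]] assms(3) by simp
next
  case True
  then have "\<rho> face_of \<rho>'" using int_cell(3)[OF assms(1,2)] by simp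
  then have "aff_dim \<rho> < aff_dim \<rho>'" using face_of_aff_dim_lt[OF cell(4)[OF assms(2)]] assms(5) by blast
  then show ?thesis using assms by simp
qed

lemma coverage:
  assumes y: "y \<in> D"
  shows "\<exists>\<rho>\<in>PP. aff_dim \<rho> = int DIM('a) \<and> y \<in> \<rho>"
proof (rule ccontr)
  assume nc: "\<not> ?thesis"
  define N where "N = \<Union>{\<rho>\<in>PP. aff_dim \<rho> = int DIM('a)}"
  have cN: "closed N" unfolding N_def using finPP cell(3) by auto
  have "y \<notin> N" using nc unfolding N_def by auto
  moreover have "open (- N)" using cN by (simp add: open_Compl)
  ultimately obtain r where r0: "r > 0" "ball y r \<subseteq> - N"
    using open_contains_ball by blast
  then have r: "r > 0" "ball y r \<inter> N = {}" by auto
  have "y \<in> closure (interior D)"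
    using convex_closure_interior[OF convD intD(1)] closedD y by (simp add: closure_closed)
  then obtain z where z: "z \<in> interior D" "dist y z < r" using r(1) closure_approachable by (metis dist_commute)
  define Oset where "Oset = interior D \<inter> ball y r"
  have oO: "open Oset" "Oset \<noteq> {}" using z unfolding Oset_def by auto
  have "Oset \<subseteq> \<Union>((\<lambda>\<rho>. affine hull \<rho>) ` {\<rho>\<in>PP. aff_dim \<rho> < int DIM('a)})"
  proof
    fix u assume u: "u \<in> Oset"
    then have "u \<in> D" unfolding Oset_def using interior_subset by blast
    then obtain \<rho> where \<rho>: "\<rho> \<in> PP" "u \<in> \<rho>" using coverD by blast
    have "u \<notin> N" using u r(2) unfolding Oset_def by blast
    then have "aff_dim \<rho> \<noteq> int DIM('a)" using \<rho> unfolding N_def by blast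
    then have "aff_dim \<rho> < int DIM('a)" using aff_dim_le_DIM[of \<rho>] by simp
    then show "u \<in> \<Union>((\<lambda>\<rho>. affine hull \<rho>) ` {\<rho>\<in>PP. aff_dim \<rho> < int DIM('a)})"
      using \<rho> by (auto intro: hull_inc)
  qed
  moreover have "negligible (\<Union>((\<lambda>\<rho>. affine hull \<rho>) ` {\<rho>\<in>PP. aff_dim \<rho> < int DIM('a)}))"
    using finPP negl_low by (intro negligible_Union) auto
  ultimately have "negligible Oset" using negligible_subset by blast
  then show False using open_not_negligible oO by blast
qed

end

lemma lin_fst0:
  assumes "linear F"
  shows "linear (\<lambda>u. F (u, 0::real))"
proof (rule linearI)
  fix u v
  have "F (u + v, 0) = F ((u,0) + (v,0))" by simp
  also have "\<dots> = F (u,0) + F (v,0)" using linear_add[OF assms] by blast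
  finally show "F (u + v, 0) = F (u,0) + F (v,0)" .
next
  fix r :: real and u
  have "F (r *\<^sub>R u, 0) = F (r *\<^sub>R (u,0))" by simp
  also have "\<dots> = r *\<^sub>R F (u,0)" using linear_scale[OF assms, of r "(u,0)"] by simp
  finally show "F (r *\<^sub>R u, 0) = r *\<^sub>R F (u,0)" .
qed

lemma subsingleton_finite: "(\<forall>a\<in>S. \<forall>b\<in>S. a = b) \<Longrightarrow> finite S"
proof (cases "S = {}")
  case False
  assume h: "\<forall>a\<in>S. \<forall>b\<in>S. a = b"
  then obtain a where "a \<in> S" using False by blast
  then have "S \<subseteq> {a}" using h by blast
  then show ?thesis using finite_subset by blast
qed simp

locale seg = fwd +
  fixes \<sigma> :: "'a::euclidean_space set" and a\<sigma> :: 'a and b\<sigma> :: real and x p :: 'a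
  assumes sPP: "\<sigma> \<in> PP" and sdim: "aff_dim \<sigma> = int DIM('a)" and saff: "\<forall>y\<in>\<sigma>. f y = a\<sigma> \<bullet> y + b\<sigma>"
    and xD: "x \<in> D" and xs: "x \<notin> \<sigma>" and pint: "p \<in> interior \<sigma>"
    and G1: "\<And>t \<rho>. 0 < t \<Longrightarrow> t \<le> 1 \<Longrightarrow> \<rho> \<in> PP \<Longrightarrow> aff_dim \<rho> < int DIM('a) - 1
               \<Longrightarrow> x + t *\<^sub>R (p - x) \<notin> \<rho>"
    and G2: "\<And>t t' \<rho>. t \<in> {0..1} \<Longrightarrow> t' \<in> {0..1} \<Longrightarrow> \<rho> \<in> PP \<Longrightarrow> aff_dim \<rho> < int DIM('a)
               \<Longrightarrow> x + t *\<^sub>R (p - x) \<in> \<rho> \<Longrightarrow> x + t' *\<^sub>R (p - x) \<in> \<rho> \<Longrightarrow> t = t'"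
begin

definition gam where "gam t = x + t *\<^sub>R (p - x)"
definition Bk where "Bk = {t \<in> {0..1}. \<exists>\<rho>\<in>PP. aff_dim \<rho> < int DIM('a) \<and> gam t \<in> \<rho>}"
definition sl where "sl \<rho> = lin_part f \<rho> (p - x, 0)"

lemma gam0: "gam 0 = x" and gam1: "gam 1 = p" by (simp_all add: gam_def)

lemma gam_diff: "gam t' - gam t = (t' - t) *\<^sub>R (p - x)"
  by (simp add: gam_def algebra_simps)

lemma gam_comb: "gam ((1 - u) * a + u * b) = (1 - u) *\<^sub>R gam a + u *\<^sub>R gam b"
  by (simp add: gam_def algebra_simps)

lemma gam_conv:
  assumes "convex S" "gam a \<in> S" "gam b \<in> S" "a \<le> t" "t \<le> b"
  shows "gam t \<in> S"
proof (cases "a = b")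
  case True then show ?thesis using assms by simp
next
  case False
  then have ab: "a < b" using assms by simp
  define u where "u = (t - a) / (b - a)"
  have u: "0 \<le> u" "u \<le> 1" using assms ab by (auto simp: u_def field_simps)
  have "u * (b - a) = t - a" using ab by (simp add: u_def)
  moreover have "(1 - u) * a + u * b = a + u * (b - a)" by (simp add: algebra_simps)
  ultimately have "t = (1 - u) * a + u * b" by simp
  then have "gam t = (1 - u) *\<^sub>R gam a + u *\<^sub>R gam b" using gam_comb by simp
  then show ?thesis using convexD[OF assms(1,2,3)] u by simp
qed

lemma ps: "p \<in> \<sigma>" using pint interior_subset by blast
lemma pD: "p \<in> D" using ps cell(2)[OF sPP] by blast
lemma px: "p \<noteq> x" using ps xs by blast

lemma gamD: assumes "t \<in> {0..1}" shows "gam t \<in> D"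
  using gam_conv[OF convD, of 0 1 t] assms xD pD by (simp add: gam0 gam1)

lemma gamInt: assumes "0 < t" "t \<le> 1" shows "gam t \<in> interior D"
proof (cases "t = 1")
  case True
  have "interior \<sigma> \<subseteq> interior D" using cell(2)[OF sPP] by (rule interior_mono)
  then show ?thesis using True pint gam1 by (metis subsetD)
next
  case False
  have pI: "p \<in> interior D" using cell(2)[OF sPP] interior_mono pint by blast
  have "open_segment p x \<subseteq> interior D"
    using in_interior_closure_convex_segment[OF convD pI] xD closure_subset by blast
  moreover have "gam t \<in> open_segment p x"
    unfolding in_segment using px assms False
    by (intro conjI exI[of _ "1 - t"]) (auto simp: gam_def algebra_simps)
  ultimately show ?thesis by blast
qed

lemma finBk: "finite Bk"
proof -
  have "Bk \<subseteq> \<Union>((\<lambda>\<rho>. {t\<in>{0..1}. gam t \<in> \<rho>}) ` {\<rho>\<in>PP. aff_dim \<rho> < int DIM('a)})"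
    unfolding Bk_def by blast
  moreover have "finite (\<Union>((\<lambda>\<rho>. {t\<in>{0..1}. gam t \<in> \<rho>}) ` {\<rho>\<in>PP. aff_dim \<rho> < int DIM('a)}))"
  proof (rule finite_Union)
    show "finite ((\<lambda>\<rho>. {t\<in>{0..1}. gam t \<in> \<rho>}) ` {\<rho>\<in>PP. aff_dim \<rho> < int DIM('a)})"
      using finPP by simp
    fix M assume "M \<in> (\<lambda>\<rho>. {t\<in>{0..1}. gam t \<in> \<rho>}) ` {\<rho>\<in>PP. aff_dim \<rho> < int DIM('a)}"
    then obtain \<rho> where \<rho>: "\<rho> \<in> PP" "aff_dim \<rho> < int DIM('a)" "M = {t\<in>{0..1}. gam t \<in> \<rho>}" by blast
    show "finite M" unfolding \<rho>(3)
      by (rule subsingleton_finite) (use G2 \<rho>(1,2) in \<open>auto simp: gam_def\<close>)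
  qed
  ultimately show ?thesis using finite_subset by blast
qed

lemma cellI:
  assumes "0 \<le> a0" "a0 < b0" "b0 \<le> 1" and nb: "\<forall>t\<in>Bk. \<not> (a0 < t \<and> t < b0)"
  shows "\<exists>\<rho>\<in>PP. aff_dim \<rho> = int DIM('a) \<and> gam ` {a0..b0} \<subseteq> \<rho>"
proof -
  define I where "I = {a0<..<b0}"
  have nc: "\<And>t \<rho>. t \<in> I \<Longrightarrow> \<rho> \<in> PP \<Longrightarrow> gam t \<in> \<rho> \<Longrightarrow> aff_dim \<rho> = int DIM('a)"
  proof -
    fix t \<rho> assume t: "t \<in> I" and \<rho>: "\<rho> \<in> PP" "gam t \<in> \<rho>"
    have t01: "t \<in> {0..1}" using t assms unfolding I_def by auto
    have "t \<notin> Bk" using nb t unfolding I_def by auto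
    then have "\<not> aff_dim \<rho> < int DIM('a)" using t01 \<rho> unfolding Bk_def by blast
    then show "aff_dim \<rho> = int DIM('a)" using aff_dim_le_DIM[of \<rho>] by simp
  qed
  have cov: "\<And>t. t \<in> I \<Longrightarrow> \<exists>\<rho>\<in>PP. gam t \<in> \<rho>"
    using gamD coverD assms unfolding I_def by fastforce
  define tm where "tm = (a0 + b0) / 2"
  have tm: "tm \<in> I" using assms unfolding I_def tm_def by auto
  obtain \<rho>0 where \<rho>0: "\<rho>0 \<in> PP" "gam tm \<in> \<rho>0" using cov[OF tm] by blast
  have d0: "aff_dim \<rho>0 = int DIM('a)" using nc[OF tm \<rho>0] .
  have cg: "\<And>t. continuous (at t) gam" unfolding gam_def by (intro continuous_intros)
  define A where "A = gam -` \<rho>0"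
  define B where "B = \<Union>((\<lambda>\<rho>. gam -` \<rho>) ` {\<rho>\<in>PP. \<rho> \<noteq> \<rho>0})"
  have cA: "closed A" unfolding A_def using cell(3)[OF \<rho>0(1)] cg by (rule continuous_closed_vimage)
  have cB: "closed B" unfolding B_def
    using finPP cell(3) cg by (intro closed_Union) (auto intro: continuous_closed_vimage)
  have disj: "A \<inter> B \<inter> I = {}"
  proof (rule ccontr)
    assume "A \<inter> B \<inter> I \<noteq> {}"
    then obtain t \<rho> where t: "t \<in> I" "gam t \<in> \<rho>0" "\<rho> \<in> PP" "\<rho> \<noteq> \<rho>0" "gam t \<in> \<rho>"
      unfolding A_def B_def by blast
    have "aff_dim \<rho> = int DIM('a)" using nc t by blast
    then have low: "aff_dim (\<rho>0 \<inter> \<rho>) < int DIM('a)" using dist_ncells[OF \<rho>0(1) t(3) d0] t(4) by auto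
    have "aff_dim (\<rho>0 \<inter> \<rho>) = int DIM('a)" using nc[OF t(1) int_cell(1)[OF \<rho>0(1) t(3)]] t by blast
    then show False using low by simp
  qed
  have cover: "I \<subseteq> A \<union> B" using cov unfolding A_def B_def by blast
  have "A \<inter> I \<noteq> {}" using tm \<rho>0 unfolding A_def by blast
  then have "B \<inter> I = {}" using connected_closedD[OF _ disj cover cA cB] unfolding I_def by auto
  then have "I \<subseteq> A" using cover by blast
  then have "closure I \<subseteq> A" using cA closure_minimal by blast
  then have "{a0..b0} \<subseteq> A" using assms(2) unfolding I_def by simp
  then show ?thesis using \<rho>0(1) d0 unfolding A_def by blast
qed

lemma slope:
  assumes "\<rho> \<in> PP" "gam t \<in> \<rho>" "gam t' \<in> \<rho>"
  shows "f (gam t') - f (gam t) = (t' - t) * sl \<rho>"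
proof -
  note l = lin_cell[OF assms(1)]
  have "f (gam t') - f (gam t) = lin_part f \<rho> (iota (gam t')) - lin_part f \<rho> (iota (gam t))"
    using l(2) assms(2,3) by simp
  also have "\<dots> = lin_part f \<rho> (gam t' - gam t, 0)" using lin_iota_diff[OF l(1)] by simp
  also have "\<dots> = lin_part f \<rho> ((t' - t) *\<^sub>R (p - x), 0)" by (simp add: gam_diff)
  also have "\<dots> = (t' - t) * sl \<rho>" unfolding sl_def
    using linear_scale[OF lin_fst0[OF l(1)], of "t' - t" "p - x"] by simp
  finally show ?thesis .
qed

lemma near1: "\<exists>\<delta>>0. \<forall>t. 1 - \<delta> < t \<and> t \<le> 1 \<longrightarrow> gam t \<in> interior \<sigma>"
proof -
  obtain e where e: "e > 0" "ball p e \<subseteq> interior \<sigma>"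
    using pint open_interior open_contains_ball by blast
  define \<delta> where "\<delta> = e / (norm (p - x) + 1)"
  have "norm (p - x) + 1 > 0" by (simp add: add_nonneg_pos)
  then have d0: "\<delta> > 0" using e by (simp add: \<delta>_def)
  have "gam t \<in> interior \<sigma>" if t: "1 - \<delta> < t" "t \<le> 1" for t
  proof -
    have "dist p (gam t) = (1 - t) * norm (p - x)"
    proof -
      have "p - gam t = (1 - t) *\<^sub>R (p - x)" by (simp add: gam_def algebra_simps)
      then show ?thesis using t by (simp add: dist_norm)
    qed
    also have "\<dots> \<le> \<delta> * norm (p - x)" using t by (intro mult_right_mono) auto
    also have "\<dots> < e"
    proof -
      have "\<delta> * norm (p - x) = e * (norm (p - x) / (norm (p - x) + 1))" by (simp add: \<delta>_def)
      also have "\<dots> < e * 1"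
      proof (intro mult_strict_left_mono)
        have "norm (p - x) + 1 > 0" by (simp add: add_nonneg_pos)
        then show "norm (p - x) / (norm (p - x) + 1) < 1" by (simp add: divide_less_eq)
      qed (use e in auto)
      finally show ?thesis by simp
    qed
    finally show ?thesis using e by auto
  qed
  then show ?thesis using d0 by blast
qed

lemma sl_sigma: "sl \<sigma> = a\<sigma> \<bullet> (p - x)"
proof -
  obtain \<delta> where d: "\<delta> > 0" "\<forall>t. 1 - \<delta> < t \<and> t \<le> 1 \<longrightarrow> gam t \<in> interior \<sigma>" using near1 by blast
  define t0 where "t0 = 1 - \<delta> / 2"
  have "gam t0 \<in> \<sigma>" using d interior_subset unfolding t0_def by fastforce
  moreover have "gam 1 \<in> \<sigma>" using ps gam1 by simp
  ultimately have "f (gam 1) - f (gam t0) = (1 - t0) * sl \<sigma>" using slope sPP by blast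
  moreover have "f (gam 1) - f (gam t0) = (1 - t0) * (a\<sigma> \<bullet> (p - x))"
    using saff \<open>gam t0 \<in> \<sigma>\<close> \<open>gam 1 \<in> \<sigma>\<close> gam_diff[of 1 t0] by (simp add: inner_diff_right[symmetric])
  moreover have "1 - t0 \<noteq> 0" using d unfolding t0_def by simp
  ultimately show ?thesis by simp
qed

end

context seg begin

lemma kink:
  assumes r1: "\<rho>1 \<in> PP" "aff_dim \<rho>1 = int DIM('a)" and r2: "\<rho>2 \<in> PP" "aff_dim \<rho>2 = int DIM('a)"
    and ne: "\<rho>1 \<noteq> \<rho>2" and ab: "0 \<le> a0" "a0 < b0" "b0 < b1" "b1 \<le> 1"
    and in1: "gam ` {a0..b0} \<subseteq> \<rho>1" and in2: "gam ` {b0..b1} \<subseteq> \<rho>2"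
  shows "sl \<rho>2 < sl \<rho>1"
proof -
  define n where "n = int DIM('a)"
  define z where "z = gam b0"
  define \<tau> where "\<tau> = \<rho>1 \<inter> \<rho>2"
  have z1: "z \<in> \<rho>1" using in1 ab unfolding z_def by auto
  have z2: "z \<in> \<rho>2" using in2 ab unfolding z_def by auto
  have zt: "z \<in> \<tau>" using z1 z2 unfolding \<tau>_def by simp
  have tPP: "\<tau> \<in> PP" and face1: "\<tau> face_of \<rho>1" and face2: "\<tau> face_of \<rho>2"
    using int_cell[OF r1(1) r2(1)] unfolding \<tau>_def by auto
  have tlow: "aff_dim \<tau> < n" using dist_ncells[OF r1(1) r2(1) r1(2) r2(2) ne] unfolding \<tau>_def n_def .
  have nohigh: "\<not> aff_dim \<rho> < n - 1" if "\<rho> \<in> PP" "z \<in> \<rho>" for \<rho>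
    using G1[of b0 \<rho>] that ab unfolding z_def gam_def n_def by auto
  have tdim: "aff_dim \<tau> = n - 1" using tlow nohigh[OF tPP zt] by simp
  have zI: "z \<in> interior D" using gamInt ab unfolding z_def by auto
  define Cz where "Cz = \<Union>{\<rho>\<in>PP. z \<notin> \<rho>}"
  have cCz: "closed Cz" unfolding Cz_def using finPP cell(3) by auto
  have "z \<notin> Cz" unfolding Cz_def by auto
  moreover have "open (- Cz)" using cCz by (simp add: open_Compl)
  ultimately obtain e1 where e1: "e1 > 0" "ball z e1 \<subseteq> - Cz" using open_contains_ball by blast
  obtain e2 where e2: "e2 > 0" "ball z e2 \<subseteq> interior D" using zI open_interior open_contains_ball by blast
  define V where "V = ball z (min e1 e2)"
  have oV: "open V" unfolding V_def by simp
  have zV: "z \<in> V" using e1 e2 unfolding V_def by simp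
  have VU: "V \<subseteq> rel_interior D" using e2 intD(2) unfolding V_def by auto
  have Vcell: "z \<in> \<rho>" if "\<rho> \<in> PP" "\<rho> \<inter> V \<noteq> {}" for \<rho>
    using that e1 unfolding V_def Cz_def by auto
  have only_tau: "\<tau>' = \<tau>" if "\<tau>' \<in> restr_dim PP V (n - 1)" for \<tau>'
  proof -
    have t': "\<tau>' \<in> PP" "aff_dim \<tau>' = n - 1" "\<tau>' \<inter> V \<noteq> {}" using that by (auto simp: restr_dim_def)
    have zt': "z \<in> \<tau>'" using Vcell t' by blast
    define \<mu> where "\<mu> = \<tau>' \<inter> \<tau>"
    have mu: "\<mu> \<in> PP" "\<mu> face_of \<tau>'" "\<mu> face_of \<tau>" using int_cell[OF t'(1) tPP] unfolding \<mu>_def by auto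
    have nh: "\<not> aff_dim \<mu> < n - 1" using nohigh[OF mu(1)] zt zt' unfolding \<mu>_def by blast
    have "\<mu> = \<tau>" using face_of_aff_dim_lt[OF cell(4)[OF tPP] mu(3)] nh tdim by force
    moreover have "\<mu> = \<tau>'" using face_of_aff_dim_lt[OF cell(4)[OF t'(1)] mu(2)] nh t'(2) by force
    ultimately show ?thesis by simp
  qed
  have dimeq1: "aff_dim \<rho>1 = aff_dim \<tau> + 1" using r1 tdim unfolding n_def by simp
  have dimeq2: "aff_dim \<rho>2 = aff_dim \<tau> + 1" using r2 tdim unfolding n_def by simp
  obtain w1 where w1: "normal_vec \<rho>1 \<tau> = (w1,0)" "norm w1 = 1" "w1 \<in> span ((+) (- z) ` \<rho>1)"
      "\<forall>m\<in>span ((+) (- z) ` \<tau>). w1 \<bullet> m = 0" "\<forall>x\<in>\<tau>. \<forall>y\<in>\<rho>1 - \<tau>. 0 < w1 \<bullet> (y - x)"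
    using nv_props[OF cell(1)[OF r1(1)] face1 zt dimeq1] by blast
  obtain w2 where w2: "normal_vec \<rho>2 \<tau> = (w2,0)" "norm w2 = 1" "w2 \<in> span ((+) (- z) ` \<rho>2)"
      "\<forall>m\<in>span ((+) (- z) ` \<tau>). w2 \<bullet> m = 0" "\<forall>x\<in>\<tau>. \<forall>y\<in>\<rho>2 - \<tau>. 0 < w2 \<bullet> (y - x)"
    using nv_props[OF cell(1)[OF r2(1)] face2 zt dimeq2] by blast
  have a0t: "gam a0 \<notin> \<tau>"
  proof
    assume "gam a0 \<in> \<tau>"
    then have "a0 = b0" using G2[of a0 b0 \<tau>] tPP tlow zt ab unfolding z_def gam_def n_def by auto
    then show False using ab by simp
  qed
  have b1t: "gam b1 \<notin> \<tau>"
  proof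
    assume "gam b1 \<in> \<tau>"
    then have "b1 = b0" using G2[of b1 b0 \<tau>] tPP tlow zt ab unfolding z_def gam_def n_def by auto
    then show False using ab by simp
  qed
  have "gam a0 \<in> \<rho>1" using in1 ab by auto
  then have "0 < w1 \<bullet> (gam a0 - z)" using w1(5) zt a0t by blast
  then have "0 < (a0 - b0) * (w1 \<bullet> (p - x))" unfolding z_def gam_diff by simp
  then have w1d: "w1 \<bullet> (p - x) < 0" using ab by (simp add: zero_less_mult_iff)
  have "gam b1 \<in> \<rho>2" using in2 ab by auto
  then have "0 < w2 \<bullet> (gam b1 - z)" using w2(5) zt b1t by blast
  then have "0 < (b1 - b0) * (w2 \<bullet> (p - x))" unfolding z_def gam_diff by simp
  then have w2d: "w2 \<bullet> (p - x) > 0" using ab by (simp add: zero_less_mult_iff)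
  have zah: "z \<in> affine hull \<rho>1" using z1 by (rule hull_inc)
  have spanU: "span ((+) (- z) ` \<rho>1) = UNIV"
  proof -
    have "dim ((+) (- z) ` \<rho>1) = DIM('a)" using aff_dim_eq_dim[OF zah] r1(2) by simp
    then show ?thesis using dim_eq_full by blast
  qed
  have dec: "u - (w \<bullet> u) *\<^sub>R w \<in> span ((+) (- z) ` \<tau>)"
    if "norm w = 1" "\<forall>m\<in>span ((+) (- z) ` \<tau>). w \<bullet> m = 0" for w u
    using face_decomp[OF face1 zt dimeq1, of w u] that spanU by simp
  have w21: "w2 = - w1"
  proof -
    define q where "q = w2 - (w1 \<bullet> w2) *\<^sub>R w1"
    have qs: "q \<in> span ((+) (- z) ` \<tau>)" using dec[OF w1(2) w1(4), of w2] unfolding q_def .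
    have "q \<bullet> q = 0"
    proof -
      have "w2 \<bullet> q = 0" "w1 \<bullet> q = 0" using w1(4) w2(4) qs by auto
      then show ?thesis unfolding q_def by (simp add: inner_diff_left)
    qed
    then have "q = 0" by simp
    then have w2eq: "w2 = (w1 \<bullet> w2) *\<^sub>R w1" unfolding q_def by simp
    then have "\<bar>w1 \<bullet> w2\<bar> = 1" using w1(2) w2(2) by (metis norm_scaleR mult.right_neutral)
    moreover have "w2 \<bullet> (p - x) = (w1 \<bullet> w2) * (w1 \<bullet> (p - x))"
      by (subst w2eq) simp
    then have "w1 \<bullet> w2 < 0" using w1d w2d by (simp add: zero_less_mult_iff)
    ultimately have "w1 \<bullet> w2 = -1" by simp
    then show ?thesis using w2eq by simp
  qed
  define S' where "S' = {\<rho>\<in>restr_dim PP V (n - 1 + 1). \<tau> face_of \<rho>}"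
  have finS: "finite S'" using finPP unfolding S'_def restr_dim_def by auto
  have r1S: "\<rho>1 \<in> S'" using r1 face1 z1 zV unfolding S'_def restr_dim_def n_def by auto
  have r2S: "\<rho>2 \<in> S'" using r2 face2 z2 zV unfolding S'_def restr_dim_def n_def by auto
  define c where "c = (\<lambda>\<rho>::'a set. if \<rho> = \<rho>1 \<or> \<rho> = \<rho>2 then (1::real) else 0)"
  have csum: "(\<Sum>\<rho>\<in>S'. c \<rho> *\<^sub>R normal_vec \<rho> \<tau>) = 0"
  proof -
    have "(\<Sum>\<rho>\<in>S'. c \<rho> *\<^sub>R normal_vec \<rho> \<tau>) = (\<Sum>\<rho>\<in>S'. if \<rho> = \<rho>1 \<or> \<rho> = \<rho>2 then normal_vec \<rho> \<tau> else 0)"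
      unfolding c_def by (rule sum.cong) auto
    also have "\<dots> = normal_vec \<rho>1 \<tau> + normal_vec \<rho>2 \<tau>" using sum_two[OF finS r1S r2S ne] .
    finally show ?thesis using w1(1) w2(1) w21 by (simp add: zero_prod_def)
  qed
  have cmink: "c \<in> pos_minkowski_weights PP V (n - 1 + 1)"
    unfolding pos_minkowski_weights_def
  proof (intro CollectI conjI ballI)
    fix \<rho> show "0 \<le> c \<rho>" by (simp add: c_def)
  next
    fix \<tau>' assume "\<tau>' \<in> restr_dim PP V (n - 1 + 1 - 1)"
    then have "\<tau>' = \<tau>" using only_tau by simp
    then show "(\<Sum>\<sigma>\<in>{\<sigma> \<in> restr_dim PP V (n - 1 + 1). \<tau>' face_of \<sigma>}. c \<sigma> *\<^sub>R normal_vec \<sigma> \<tau>') = 0"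
      using csum unfolding S'_def by simp
  qed
  have tU: "\<tau> \<in> restr_dim PP (rel_interior D) (n - 1)"
    using tPP tdim zt zI intD(2) unfolding restr_dim_def by auto
  have "0 < weight_prod PP V (n - 1 + 1) f c \<tau>"
    using sc unfolding strictly_concave_def
  proof (elim conjE allE[of _ "n - 1"] ballE[of _ _ \<tau>] allE[of _ V] impE ballE[of _ _ c])
    show "0 < weight_prod PP V (n - 1 + 1) f c \<tau>" if "0 < weight_prod PP V (n - 1 + 1) f c \<tau>" using that .
    show "open V \<and> V \<subseteq> rel_interior D \<and> V \<inter> \<tau> \<noteq> {}" using oV VU zV zt by blast
    show "\<exists>\<sigma>\<in>restr_dim PP V (n - 1 + 1). \<tau> face_of \<sigma> \<and> 0 < c \<sigma>"
      using r1S unfolding S'_def c_def by auto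
  qed (use cmink tU in auto)
  also have "weight_prod PP V (n - 1 + 1) f c \<tau> = - (lin_part f \<rho>1 (normal_vec \<rho>1 \<tau>) + lin_part f \<rho>2 (normal_vec \<rho>2 \<tau>))"
  proof -
    have "(\<Sum>\<rho>\<in>S'. c \<rho> * lin_part f \<rho> (normal_vec \<rho> \<tau>)) =
        (\<Sum>\<rho>\<in>S'. if \<rho> = \<rho>1 \<or> \<rho> = \<rho>2 then lin_part f \<rho> (normal_vec \<rho> \<tau>) else 0)"
      unfolding c_def by (rule sum.cong) auto
    also have "\<dots> = lin_part f \<rho>1 (normal_vec \<rho>1 \<tau>) + lin_part f \<rho>2 (normal_vec \<rho>2 \<tau>)"
      using sum_two[OF finS r1S r2S ne] .
    finally show ?thesis unfolding weight_prod_def S'_def by simp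
  qed
  finally have wp: "lin_part f \<rho>1 (w1, 0) + lin_part f \<rho>2 (w2, 0) < 0" using w1(1) w2(1) by simp
  note l1 = lin_cell[OF r1(1)] and l2 = lin_cell[OF r2(1)]
  define H where "H = (\<lambda>u. lin_part f \<rho>1 (u, 0) - lin_part f \<rho>2 (u, 0))"
  have linH: "linear H" unfolding H_def
    using lin_fst0[OF l1(1)] lin_fst0[OF l2(1)] by (rule linear_compose_sub)
  have "lin_part f \<rho>1 (w1, 0) = - lin_part f \<rho>1 (w2, 0)"
    using w21 linear_neg[OF lin_fst0[OF l1(1)], of w2] by simp
  then have Hw2: "H w2 > 0" using wp unfolding H_def by simp
  have H0: "H m = 0" if mt: "m \<in> (+) (- z) ` \<tau>" for m
  proof -
    obtain y where y: "y \<in> \<tau>" "m = - z + y" using mt by blast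
    have "lin_part f \<rho>1 (y - z, 0) = f y - f z"
      using lin_iota_diff[OF l1(1), of y z] l1(2) y zt unfolding \<tau>_def by auto
    moreover have "lin_part f \<rho>2 (y - z, 0) = f y - f z"
      using lin_iota_diff[OF l2(1), of y z] l2(2) y zt unfolding \<tau>_def by auto
    ultimately show ?thesis using y by (simp add: H_def)
  qed
  have Hspan: "H m = 0" if "m \<in> span ((+) (- z) ` \<tau>)" for m
    using linear_eq_0_on_span[OF linH] H0 that by blast
  have "H (p - x) = H ((p - x) - (w2 \<bullet> (p - x)) *\<^sub>R w2) + (w2 \<bullet> (p - x)) * H w2"
    using linear_diff[OF linH] linear_scale[OF linH] by simp
  also have "\<dots> = (w2 \<bullet> (p - x)) * H w2" using Hspan[OF dec[OF w2(2) w2(4)]] by simp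
  finally have "H (p - x) > 0" using w2d Hw2 by simp
  then show ?thesis unfolding H_def sl_def by simp
qed

end

context seg begin

lemma Bk01: "t \<in> Bk \<Longrightarrow> 0 \<le> t \<and> t \<le> 1" unfolding Bk_def by auto

lemma next_break:
  assumes "0 \<le> a0" "a0 < 1"
  shows "\<exists>b1. a0 < b1 \<and> b1 \<le> 1 \<and> (\<forall>t\<in>Bk. \<not> (a0 < t \<and> t < b1)) \<and> (b1 < 1 \<longrightarrow> b1 \<in> Bk)"
proof -
  define K where "K = {t\<in>Bk. a0 < t}"
  have fK: "finite (insert 1 K)" using finBk unfolding K_def by simp
  define b1 where "b1 = Min (insert 1 K)"
  have b1le: "b1 \<le> 1" unfolding b1_def using fK by simp
  have b1in: "b1 \<in> insert 1 K" unfolding b1_def using fK by (rule Min_in) simp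
  have gt: "a0 < b1" using b1in assms unfolding K_def by auto
  have nb: "\<forall>t\<in>Bk. \<not> (a0 < t \<and> t < b1)"
  proof (intro ballI notI)
    fix t assume "t \<in> Bk" "a0 < t \<and> t < b1"
    then have "t \<in> insert 1 K" unfolding K_def by simp
    then have "b1 \<le> t" unfolding b1_def using fK by simp
    then show False using \<open>a0 < t \<and> t < b1\<close> by simp
  qed
  have "b1 < 1 \<longrightarrow> b1 \<in> Bk" using b1in unfolding K_def by auto
  then show ?thesis using gt b1le nb by blast
qed

lemma ell_diff: "a\<sigma> \<bullet> gam t' - a\<sigma> \<bullet> gam t = (t' - t) * sl \<sigma>"
  using gam_diff[of t' t] sl_sigma by (simp add: inner_diff_right[symmetric])

lemma main_ind:
  "\<forall>a0. card {t\<in>Bk. a0 < t} = N \<longrightarrow> 0 \<le> a0 \<longrightarrow> a0 < 1 \<longrightarrow> gam a0 \<notin> \<sigma> \<longrightarrow>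
     f (gam a0) < a\<sigma> \<bullet> gam a0 + b\<sigma> \<and>
     (\<forall>\<rho> e. \<rho> \<in> PP \<longrightarrow> aff_dim \<rho> = int DIM('a) \<longrightarrow> 0 < e \<longrightarrow> gam ` {a0..a0+e} \<subseteq> \<rho> \<longrightarrow> sl \<sigma> < sl \<rho>)"
proof (induction N rule: less_induct)
  case (less N)
  show ?case
  proof (intro allI impI)
    fix a0 assume cN: "card {t\<in>Bk. a0 < t} = N" and a0: "0 \<le> a0" "a0 < 1" and ns: "gam a0 \<notin> \<sigma>"
    obtain b1 where b1: "a0 < b1" "b1 \<le> 1" "\<forall>t\<in>Bk. \<not> (a0 < t \<and> t < b1)" "b1 < 1 \<longrightarrow> b1 \<in> Bk"
      using next_break[OF a0] by blast
    obtain \<rho>0 where r0: "\<rho>0 \<in> PP" "aff_dim \<rho>0 = int DIM('a)" "gam ` {a0..b1} \<subseteq> \<rho>0"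
      using cellI[OF a0(1) b1(1) b1(2) b1(3)] by blast
    have a0r: "gam a0 \<in> \<rho>0" using r0 b1 by auto
    have b1r: "gam b1 \<in> \<rho>0" using r0 b1 by auto
    have r0s: "\<rho>0 \<noteq> \<sigma>" using a0r ns by blast
    have b1lt: "b1 < 1"
    proof (rule ccontr)
      assume "\<not> b1 < 1"
      then have b11: "b1 = 1" using b1 by simp
      obtain \<delta> where d: "\<delta> > 0" "\<forall>t. 1 - \<delta> < t \<and> t \<le> 1 \<longrightarrow> gam t \<in> interior \<sigma>" using near1 by blast
      define t where "t = (max a0 (1 - \<delta>) + 1) / 2"
      have t: "a0 < t" "t < 1" "1 - \<delta> < t" using a0 d unfolding t_def by auto
      have "gam t \<in> \<sigma>" using d t interior_subset by fastforce
      moreover have "gam t \<in> \<rho>0" using r0 t b11 by auto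
      ultimately have "t \<in> Bk"
        using dist_ncells[OF r0(1) sPP r0(2) sdim r0s] int_cell(1)[OF r0(1) sPP] t a0
        unfolding Bk_def by auto
      then show False using b1(3) t b11 by blast
    qed
    have b1B: "b1 \<in> Bk" using b1 b1lt by blast
    have sl0: "f (gam b1) - f (gam a0) = (b1 - a0) * sl \<rho>0" using slope[OF r0(1) a0r b1r] .
    have key: "sl \<sigma> < sl \<rho>0 \<and> f (gam b1) \<le> a\<sigma> \<bullet> gam b1 + b\<sigma>"
    proof (cases "gam b1 \<in> \<sigma>")
      case True
      have "gam ` {b1..1} \<subseteq> \<sigma>"
        using gam_conv[OF cell(4)[OF sPP] True, of 1] ps gam1 by auto
      then have "sl \<sigma> < sl \<rho>0" using kink[OF r0(1,2) sPP sdim r0s a0(1) b1(1) b1lt order_refl r0(3)] by simp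
      then show ?thesis using saff True by simp
    next
      case False
      have sub: "{t\<in>Bk. b1 < t} \<subset> {t\<in>Bk. a0 < t}" using b1B b1(1) by auto
      have lt: "card {t\<in>Bk. b1 < t} < N"
        using psubset_card_mono[OF _ sub] finBk cN by simp
      have IH: "f (gam b1) < a\<sigma> \<bullet> gam b1 + b\<sigma> \<and>
          (\<forall>\<rho> e. \<rho> \<in> PP \<longrightarrow> aff_dim \<rho> = int DIM('a) \<longrightarrow> 0 < e \<longrightarrow> gam ` {b1..b1+e} \<subseteq> \<rho> \<longrightarrow> sl \<sigma> < sl \<rho>)"
        using less.IH[OF lt] b1 a0 b1lt False by auto
      obtain b2 where b2: "b1 < b2" "b2 \<le> 1" "\<forall>t\<in>Bk. \<not> (b1 < t \<and> t < b2)"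
        using next_break[of b1] b1 a0 b1lt by auto
      obtain \<rho>1 where r1: "\<rho>1 \<in> PP" "aff_dim \<rho>1 = int DIM('a)" "gam ` {b1..b2} \<subseteq> \<rho>1"
        using cellI[of b1 b2] b1 a0 b2 by auto
      have "sl \<sigma> < sl \<rho>1" using IH r1 b2 by (metis add.commute diff_add_cancel diff_gt_0_iff_gt)
      moreover have "sl \<rho>1 \<le> sl \<rho>0"
      proof (cases "\<rho>0 = \<rho>1")
        case True then show ?thesis by simp
      next
        case False
        show ?thesis using kink[OF r0(1,2) r1(1,2) False a0(1) b1(1) b2(1) b2(2) r0(3) r1(3)] by simp
      qed
      ultimately show ?thesis using IH by simp
    qed
    have "f (gam a0) = f (gam b1) - (b1 - a0) * sl \<rho>0" using sl0 by simp
    also have "\<dots> < a\<sigma> \<bullet> gam b1 + b\<sigma> - (b1 - a0) * sl \<sigma>"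
      using key b1(1) by (smt (verit) mult_strict_left_mono)
    also have "\<dots> = a\<sigma> \<bullet> gam a0 + b\<sigma>" using ell_diff[of b1 a0] by simp
    finally have fin1: "f (gam a0) < a\<sigma> \<bullet> gam a0 + b\<sigma>" .
    have fin2: "sl \<sigma> < sl \<rho>" if "\<rho> \<in> PP" "aff_dim \<rho> = int DIM('a)" "0 < e" "gam ` {a0..a0+e} \<subseteq> \<rho>" for \<rho> e
    proof -
      define t' where "t' = a0 + min e (b1 - a0)"
      have t': "a0 < t'" "t' \<le> b1" "t' \<le> a0 + e" using that b1 unfolding t'_def by auto
      have "gam t' \<in> \<rho>" "gam a0 \<in> \<rho>" using that t' by auto
      then have "f (gam t') - f (gam a0) = (t' - a0) * sl \<rho>" using slope that(1) by blast
      moreover have "gam t' \<in> \<rho>0" using r0(3) t' by auto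
      then have "f (gam t') - f (gam a0) = (t' - a0) * sl \<rho>0"
        using slope[OF r0(1) a0r] by blast
      ultimately have "sl \<rho> = sl \<rho>0" using t' by simp
      then show ?thesis using key by simp
    qed
    show "f (gam a0) < a\<sigma> \<bullet> gam a0 + b\<sigma> \<and>
      (\<forall>\<rho> e. \<rho> \<in> PP \<longrightarrow> aff_dim \<rho> = int DIM('a) \<longrightarrow> 0 < e \<longrightarrow> gam ` {a0..a0+e} \<subseteq> \<rho> \<longrightarrow> sl \<sigma> < sl \<rho>)"
      using fin1 fin2 by blast
  qed
qed

lemma stepA_seg: "f x < a\<sigma> \<bullet> x + b\<sigma>"
  using main_ind[of "card {t\<in>Bk. 0 < t}"] xs gam0 by auto

end

lemma small_step: assumes "(e::real) > 0" shows "\<exists>\<delta>>0. \<delta> * norm (v::'a::real_normed_vector) < e"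
proof -
  have n1: "norm v + 1 > 0" by (simp add: add_nonneg_pos)
  define \<delta> where "\<delta> = e / (norm v + 1)"
  have "\<delta> > 0" using assms n1 by (simp add: \<delta>_def)
  moreover have "\<delta> * norm v < e"
  proof -
    have "\<delta> * norm v = e * (norm v / (norm v + 1))" by (simp add: \<delta>_def)
    also have "\<dots> < e * 1" using assms n1 by (intro mult_strict_left_mono) (auto simp: divide_less_eq)
    finally show ?thesis by simp
  qed
  ultimately show ?thesis by blast
qed

lemma extrapolate:
  fixes S :: "'a::euclidean_space set"
  assumes z: "z \<in> rel_interior S" and y: "y \<in> S"
  shows "\<exists>\<delta>>0. z + \<delta> *\<^sub>R (z - y) \<in> S"
proof -
  obtain e where e: "e > 0" "ball z e \<inter> affine hull S \<subseteq> S" and zS: "z \<in> S"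
    using z unfolding mem_rel_interior_ball by blast
  obtain \<delta> where d: "\<delta> > 0" "\<delta> * norm (z - y) < e" using small_step[OF e(1)] by blast
  have "z + \<delta> *\<^sub>R (z - y) = (1 + \<delta>) *\<^sub>R z + (- \<delta>) *\<^sub>R y" by (simp add: algebra_simps)
  also have "\<dots> \<in> affine hull S"
    using zS y by (intro mem_affine) (auto intro: hull_inc)
  finally have "z + \<delta> *\<^sub>R (z - y) \<in> affine hull S" .
  moreover have "z + \<delta> *\<^sub>R (z - y) \<in> ball z e" using d by (simp add: dist_norm)
  ultimately show ?thesis using e d by blast
qed

lemma extrapolate_seg:
  fixes z y :: "'a::real_vector"
  assumes "\<delta> > 0" "y \<noteq> z"
  shows "z \<in> open_segment y (z + \<delta> *\<^sub>R (z - y))"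
proof -
  define u where "u = 1 / (1 + \<delta>)"
  have u: "0 < u" "u < 1" using assms by (auto simp: u_def)
  have u1: "u * (1 + \<delta>) = 1" using assms by (simp add: u_def)
  have "(1 - u) *\<^sub>R y + u *\<^sub>R (z + \<delta> *\<^sub>R (z - y)) = y + u *\<^sub>R ((1 + \<delta>) *\<^sub>R (z - y))"
    by (simp add: scaleR_add_left scaleR_diff_left scaleR_add_right scaleR_diff_right)
  also have "\<dots> = y + (z - y)" using u1 by simp
  finally have eq: "(1 - u) *\<^sub>R y + u *\<^sub>R (z + \<delta> *\<^sub>R (z - y)) = z" by simp
  have ne: "y \<noteq> z + \<delta> *\<^sub>R (z - y)"
  proof
    assume h: "y = z + \<delta> *\<^sub>R (z - y)"
    have "(1 + \<delta>) *\<^sub>R (z - y) = (z + \<delta> *\<^sub>R (z - y)) - y" by (simp add: scaleR_add_left)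
    also have "\<dots> = 0" using h by (metis right_minus_eq)
    finally have "(1 + \<delta>) *\<^sub>R (z - y) = 0" .
    then show False using assms by simp
  qed
  show ?thesis unfolding in_segment
  proof (intro conjI exI[of _ u])
    show "y \<noteq> z + \<delta> *\<^sub>R (z - y)" by (rule ne)
    show "0 < u" "u < 1" by (rule u(1), rule u(2))
    show "z = (1 - u) *\<^sub>R y + u *\<^sub>R (z + \<delta> *\<^sub>R (z - y))" using eq by (rule sym)
  qed
qed

context fwd begin

lemma stepA:
  assumes sPP: "\<sigma> \<in> PP" and sdim: "aff_dim \<sigma> = int DIM('a)" and saff: "\<forall>y\<in>\<sigma>. f y = a \<bullet> y + b"
    and xD: "x \<in> D" and xs: "x \<notin> \<sigma>"
  shows "f x < a \<bullet> x + b"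
proof -
  define Bad where "Bad = \<Union>((\<lambda>\<rho>. affine hull \<rho>) ` {\<rho>\<in>PP. aff_dim \<rho> < int DIM('a)})
      \<union> \<Union>((\<lambda>\<rho>. affine hull (insert x \<rho>)) ` {\<rho>\<in>PP. aff_dim \<rho> < int DIM('a) - 1})"
  have n1: "negligible (\<Union>((\<lambda>\<rho>. affine hull \<rho>) ` {\<rho>\<in>PP. aff_dim \<rho> < int DIM('a)}))"
  proof (rule negligible_Union)
    show "finite ((\<lambda>\<rho>. affine hull \<rho>) ` {\<rho>\<in>PP. aff_dim \<rho> < int DIM('a)})" using finPP by simp
  next
    fix T assume "T \<in> (\<lambda>\<rho>. affine hull \<rho>) ` {\<rho>\<in>PP. aff_dim \<rho> < int DIM('a)}"
    then obtain \<rho> where "aff_dim \<rho> < int DIM('a)" "T = affine hull \<rho>" by blast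
    then show "negligible T" using negl_low by blast
  qed
  have n2: "negligible (\<Union>((\<lambda>\<rho>. affine hull (insert x \<rho>)) ` {\<rho>\<in>PP. aff_dim \<rho> < int DIM('a) - 1}))"
  proof (rule negligible_Union)
    show "finite ((\<lambda>\<rho>. affine hull (insert x \<rho>)) ` {\<rho>\<in>PP. aff_dim \<rho> < int DIM('a) - 1})" using finPP by simp
  next
    fix T assume "T \<in> (\<lambda>\<rho>. affine hull (insert x \<rho>)) ` {\<rho>\<in>PP. aff_dim \<rho> < int DIM('a) - 1}"
    then obtain \<rho> where r: "aff_dim \<rho> < int DIM('a) - 1" "T = affine hull (insert x \<rho>)" by blast
    have "aff_dim (insert x \<rho>) \<le> aff_dim \<rho> + 1" by (simp add: aff_dim_insert)
    then have "aff_dim (insert x \<rho>) < int DIM('a)" using r(1) by linarith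
    then show "negligible T" using negl_low r(2) by blast
  qed
  have nB: "negligible Bad" unfolding Bad_def using negligible_Un[OF n1 n2] .
  have "interior \<sigma> \<noteq> {}" using full_interior[OF cell(4)[OF sPP] sdim] by simp
  then have "\<not> interior \<sigma> \<subseteq> Bad"
    using open_not_negligible[of "interior \<sigma>"] negligible_subset nB by blast
  then obtain p where p: "p \<in> interior \<sigma>" "p \<notin> Bad" by blast
  have G1: "x + t *\<^sub>R (p - x) \<notin> \<rho>" if "0 < t" "t \<le> 1" "\<rho> \<in> PP" "aff_dim \<rho> < int DIM('a) - 1" for t \<rho>
  proof
    assume yin: "x + t *\<^sub>R (p - x) \<in> \<rho>"
    have "(1 - 1/t) *\<^sub>R x + (1/t) *\<^sub>R (x + t *\<^sub>R (p - x)) \<in> affine hull (insert x \<rho>)"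
      using yin by (intro mem_affine) (auto intro: hull_inc)
    moreover have "(1 - 1/t) *\<^sub>R x + (1/t) *\<^sub>R (x + t *\<^sub>R (p - x)) = p"
    proof -
      have "(1/t) *\<^sub>R (t *\<^sub>R (p - x)) = p - x" using that(1) by simp
      then show ?thesis by (simp add: scaleR_add_right scaleR_diff_left)
    qed
    ultimately have pin: "p \<in> affine hull (insert x \<rho>)" by simp
    have "\<rho> \<in> {\<rho>\<in>PP. aff_dim \<rho> < int DIM('a) - 1}" using that(3,4) by simp
    then have "p \<in> \<Union>((\<lambda>\<rho>. affine hull (insert x \<rho>)) ` {\<rho>\<in>PP. aff_dim \<rho> < int DIM('a) - 1})"
      using pin by blast
    then have "p \<in> Bad" unfolding Bad_def by (rule UnI2)
    then show False using p by blast
  qed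
  have G2: "t = t'" if "t \<in> {0..1}" "t' \<in> {0..1}" "\<rho> \<in> PP" "aff_dim \<rho> < int DIM('a)"
      "x + t *\<^sub>R (p - x) \<in> \<rho>" "x + t' *\<^sub>R (p - x) \<in> \<rho>" for t t' \<rho>
  proof (rule ccontr)
    assume ne: "t \<noteq> t'"
    define l where "l = (1 - t) / (t' - t)"
    have "(1 - l) *\<^sub>R (x + t *\<^sub>R (p - x)) + l *\<^sub>R (x + t' *\<^sub>R (p - x)) \<in> affine hull \<rho>"
      using that by (intro mem_affine) (auto intro: hull_inc)
    moreover have "(1 - l) *\<^sub>R (x + t *\<^sub>R (p - x)) + l *\<^sub>R (x + t' *\<^sub>R (p - x)) = x + (t + l * (t' - t)) *\<^sub>R (p - x)"
      by (simp add: scaleR_add_right scaleR_diff_left scaleR_add_left algebra_simps)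
    moreover have "t + l * (t' - t) = 1" using ne by (simp add: l_def)
    ultimately have pin: "p \<in> affine hull \<rho>" by simp
    have "\<rho> \<in> {\<rho>\<in>PP. aff_dim \<rho> < int DIM('a)}" using that(3,4) by simp
    then have "p \<in> \<Union>((\<lambda>\<rho>. affine hull \<rho>) ` {\<rho>\<in>PP. aff_dim \<rho> < int DIM('a)})"
      using pin by blast
    then have "p \<in> Bad" unfolding Bad_def by (rule UnI1)
    then show False using p by blast
  qed
  have "seg D PP f \<sigma> a b x p"
    apply (rule seg.intro[OF fwd_axioms], rule seg_axioms.intro)
           apply (fact sPP)
          apply (fact sdim)
         apply (fact saff)
        apply (fact xD)
       apply (fact xs)
      apply (fact p(1))
    using G1 apply blast
    using G2 apply blast
    done
  then show ?thesis by (rule seg.stepA_seg)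
qed

lemma coef: assumes "\<rho> \<in> PP" shows "\<exists>a b. \<forall>y\<in>\<rho>. f y = a \<bullet> y + b"
  using def assms unfolding defined_on_def by blast

lemma le_ncell:
  assumes "\<rho> \<in> PP" "aff_dim \<rho> = int DIM('a)" "\<forall>y\<in>\<rho>. f y = a \<bullet> y + b" "y \<in> D"
  shows "f y \<le> a \<bullet> y + b"
  using stepA[OF assms(1,2,3,4)] assms(3) by (cases "y \<in> \<rho>") auto

lemma concave: "concave_on D f"
  unfolding concave_on_iff
proof (intro conjI ballI allI impI)
  show "convex D" by (rule convD)
  fix x y assume x: "x \<in> D" and y: "y \<in> D"
  fix u v :: real assume uv: "0 \<le> u" "0 \<le> v" "u + v = 1"
  define w where "w = u *\<^sub>R x + v *\<^sub>R y"
  have wD: "w \<in> D" unfolding w_def using convexD[OF convD x y uv] .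
  obtain \<rho> where r: "\<rho> \<in> PP" "aff_dim \<rho> = int DIM('a)" "w \<in> \<rho>" using coverage[OF wD] by blast
  obtain a b where ab: "\<forall>y\<in>\<rho>. f y = a \<bullet> y + b" using coef[OF r(1)] by blast
  have bb: "u * b + v * b = b" using uv(3) by (metis distrib_right mult_1)
  have "f w = a \<bullet> w + b" using ab r(3) by simp
  also have "\<dots> = u * (a \<bullet> x) + v * (a \<bullet> y) + (u * b + v * b)" unfolding bb w_def by (simp add: inner_add_right)
  finally have "f w = u * (a \<bullet> x + b) + v * (a \<bullet> y + b)" by (simp add: algebra_simps)
  moreover have "u * f x \<le> u * (a \<bullet> x + b)" using le_ncell[OF r(1,2) ab x] uv by (simp add: mult_left_mono)
  moreover have "v * f y \<le> v * (a \<bullet> y + b)" using le_ncell[OF r(1,2) ab y] uv by (simp add: mult_left_mono)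
  ultimately show "u * f x + v * f y \<le> f (u *\<^sub>R x + v *\<^sub>R y)" unfolding w_def by simp
qed

end

context fwd begin

lemma Dne: "D \<noteq> {}" using intD(1) interior_subset by blast

lemma contain:
  assumes "\<tau> \<in> PP" "z \<in> rel_interior \<tau>" "\<rho> \<in> PP" "z \<in> \<rho>"
  shows "\<tau> \<subseteq> \<rho>"
proof -
  have "(\<rho> \<inter> \<tau>) face_of \<tau>" using int_cell(3)[OF assms(3,1)] .
  moreover have "(\<rho> \<inter> \<tau>) \<inter> rel_interior \<tau> \<noteq> {}" using assms(2,4) rel_interior_subset by blast
  ultimately have "\<tau> \<subseteq> \<rho> \<inter> \<tau>" using subset_of_face_of by blast
  then show ?thesis by blast
qed

lemma PP_sub: assumes tPP: "\<tau> \<in> PP" shows "\<tau> \<in> complex_of D f"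
proof (cases "\<tau> = {}")
  case True
  obtain y where "y \<in> D" using Dne by blast
  then obtain \<sigma> where s: "\<sigma> \<in> PP" "aff_dim \<sigma> = int DIM('a)" using coverage by blast
  obtain a b where ab: "\<forall>y\<in>\<sigma>. f y = a \<bullet> y + b" using coef[OF s(1)] by blast
  have "\<forall>x\<in>D - \<tau>. f x < a \<bullet> x + (b + 1)" using le_ncell[OF s ab] by fastforce
  then show ?thesis unfolding complex_of_def using True by blast
next
  case False
  have tD: "\<tau> \<subseteq> D" using cell(2)[OF tPP] .
  obtain z where z: "z \<in> rel_interior \<tau>" using False rel_interior_eq_empty cell(4)[OF tPP] by blast
  have zt: "z \<in> \<tau>" using z rel_interior_subset by blast
  obtain F where F: "finite F" "D = \<Inter>F" "\<forall>h\<in>F. \<exists>a b. a \<noteq> 0 \<and> h = {x. a \<bullet> x \<le> b}"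
    using polyD unfolding polyhedron_def by blast
  have "\<forall>h\<in>F. \<exists>ab. h = {x. fst ab \<bullet> x \<le> snd ab}" using F(3) by force
  then obtain g where g: "\<forall>h\<in>F. h = {x. fst (g h) \<bullet> x \<le> snd (g h)}" by metis
  define A where "A h = fst (g h)" for h
  define B where "B h = snd (g h)" for h
  have Dmem: "y \<in> D \<longleftrightarrow> (\<forall>h\<in>F. A h \<bullet> y \<le> B h)" for y
  proof -
    have "y \<in> D \<longleftrightarrow> (\<forall>h\<in>F. y \<in> h)" using F(2) by auto
    also have "\<dots> \<longleftrightarrow> (\<forall>h\<in>F. A h \<bullet> y \<le> B h)"
    proof
      assume "\<forall>h\<in>F. y \<in> h" then show "\<forall>h\<in>F. A h \<bullet> y \<le> B h"
        using g unfolding A_def B_def by blast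
    next
      assume h: "\<forall>h\<in>F. A h \<bullet> y \<le> B h"
      show "\<forall>h\<in>F. y \<in> h"
      proof
        fix h assume hF: "h \<in> F"
        then have "h = {x. A h \<bullet> x \<le> B h}" using g unfolding A_def B_def by blast
        then show "y \<in> h" using h hF by blast
      qed
    qed
    finally show ?thesis .
  qed
  define Fz where "Fz = {h\<in>F. A h \<bullet> z = B h}"
  have fFz: "finite Fz" using F(1) unfolding Fz_def by simp
  define R where "R = {\<rho>\<in>PP. aff_dim \<rho> = int DIM('a) \<and> \<tau> \<subseteq> \<rho>}"
  have fR: "finite R" using finPP unfolding R_def by simp
  have "\<forall>\<rho>\<in>PP. \<exists>ab. \<forall>y\<in>\<rho>. f y = fst ab \<bullet> y + snd ab" using coef by force
  then obtain cf where cf: "\<forall>\<rho>\<in>PP. \<forall>y\<in>\<rho>. f y = fst (cf \<rho>) \<bullet> y + snd (cf \<rho>)" by metis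
  define ca where "ca \<rho> = fst (cf \<rho>)" for \<rho>
  define cb where "cb \<rho> = snd (cf \<rho>)" for \<rho>
  have cab: "\<forall>y\<in>\<rho>. f y = ca \<rho> \<bullet> y + cb \<rho>" if "\<rho> \<in> PP" for \<rho> using cf that unfolding ca_def cb_def by blast
  obtain \<rho>z where rz: "\<rho>z \<in> PP" "aff_dim \<rho>z = int DIM('a)" "z \<in> \<rho>z" using coverage zt tD by blast
  have "\<rho>z \<in> R" using rz contain[OF tPP z rz(1,3)] unfolding R_def by blast
  then have Rne: "R \<noteq> {}" by blast
  define k where "k = real (card R)"
  have k0: "k > 0" using fR Rne unfolding k_def by (simp add: card_gt_0_iff)
  define ell where "ell y = (\<Sum>\<rho>\<in>R. ca \<rho> \<bullet> y + cb \<rho>) / k + (\<Sum>h\<in>Fz. B h - A h \<bullet> y)" for y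
  define a where "a = (1 / k) *\<^sub>R (\<Sum>\<rho>\<in>R. ca \<rho>) - (\<Sum>h\<in>Fz. A h)"
  define b where "b = (\<Sum>\<rho>\<in>R. cb \<rho>) / k + (\<Sum>h\<in>Fz. B h)"
  have ell_eq: "ell y = a \<bullet> y + b" for y
  proof -
    have "a \<bullet> y = (\<Sum>\<rho>\<in>R. ca \<rho> \<bullet> y) / k - (\<Sum>h\<in>Fz. A h \<bullet> y)"
      unfolding a_def by (simp add: inner_diff_left inner_sum_left)
    then show ?thesis unfolding ell_def b_def
      by (simp add: sum.distrib sum_subtractf add_divide_distrib)
  qed
  have Aw: "A h \<bullet> (z + \<delta> *\<^sub>R (z - y)) = A h \<bullet> z + \<delta> * (A h \<bullet> z - A h \<bullet> y)" for h \<delta> y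
    by (simp add: inner_add_right inner_diff_right)
  have onT: "\<forall>h\<in>Fz. A h \<bullet> y = B h" if yt: "y \<in> \<tau>" for y
  proof
    fix h assume hF: "h \<in> Fz"
    obtain \<delta> where d: "\<delta> > 0" "z + \<delta> *\<^sub>R (z - y) \<in> \<tau>" using extrapolate[OF z yt] by blast
    have "A h \<bullet> (z + \<delta> *\<^sub>R (z - y)) \<le> B h" using d(2) tD Dmem hF unfolding Fz_def by blast
    then have "\<delta> * (B h - A h \<bullet> y) \<le> 0" using Aw[of h \<delta> y] hF unfolding Fz_def by (simp add: algebra_simps)
    then have "B h \<le> A h \<bullet> y" using d(1) by (simp add: mult_le_0_iff)
    moreover have "A h \<bullet> y \<le> B h" using yt tD Dmem hF unfolding Fz_def by blast
    ultimately show "A h \<bullet> y = B h" by simp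
  qed
  have eqT: "f y = ell y" if yt: "y \<in> \<tau>" for y
  proof -
    have "(\<Sum>\<rho>\<in>R. ca \<rho> \<bullet> y + cb \<rho>) = (\<Sum>\<rho>\<in>R. f y)"
    proof (rule sum.cong)
      fix \<rho> assume "\<rho> \<in> R"
      then have "\<rho> \<in> PP" "y \<in> \<rho>" using yt unfolding R_def by auto
      then show "ca \<rho> \<bullet> y + cb \<rho> = f y" using cab by simp
    qed simp
    then have "(\<Sum>\<rho>\<in>R. ca \<rho> \<bullet> y + cb \<rho>) / k = f y" using k0 unfolding k_def by simp
    moreover have "(\<Sum>h\<in>Fz. B h - A h \<bullet> y) = 0" using onT[OF yt] by simp
    ultimately show ?thesis unfolding ell_def by simp
  qed
  have ltT: "f y < ell y" if yD: "y \<in> D" and yt: "y \<notin> \<tau>" for y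
  proof (rule ccontr)
    assume "\<not> f y < ell y"
    then have le: "ell y \<le> f y" by simp
    have t1: "\<forall>\<rho>\<in>R. 0 \<le> ca \<rho> \<bullet> y + cb \<rho> - f y"
      using le_ncell cab yD unfolding R_def by fastforce
    have t2: "\<forall>h\<in>Fz. 0 \<le> B h - A h \<bullet> y" using yD Dmem unfolding Fz_def by auto
    have s1: "0 \<le> (\<Sum>\<rho>\<in>R. ca \<rho> \<bullet> y + cb \<rho> - f y)" using t1 by (simp add: sum_nonneg)
    have s2: "0 \<le> (\<Sum>h\<in>Fz. B h - A h \<bullet> y)" using t2 by (simp add: sum_nonneg)
    have "(\<Sum>\<rho>\<in>R. ca \<rho> \<bullet> y + cb \<rho> - f y) = (\<Sum>\<rho>\<in>R. ca \<rho> \<bullet> y + cb \<rho>) - k * f y"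
      unfolding k_def by (simp add: sum_subtractf)
    then have "ell y - f y = (\<Sum>\<rho>\<in>R. ca \<rho> \<bullet> y + cb \<rho> - f y) / k + (\<Sum>h\<in>Fz. B h - A h \<bullet> y)"
      unfolding ell_def using k0 by (simp add: diff_divide_distrib)
    then have "(\<Sum>\<rho>\<in>R. ca \<rho> \<bullet> y + cb \<rho> - f y) / k + (\<Sum>h\<in>Fz. B h - A h \<bullet> y) \<le> 0" using le by simp
    moreover have "0 \<le> (\<Sum>\<rho>\<in>R. ca \<rho> \<bullet> y + cb \<rho> - f y) / k" using s1 k0 by simp
    ultimately have z1': "(\<Sum>\<rho>\<in>R. ca \<rho> \<bullet> y + cb \<rho> - f y) / k = 0" and z2: "(\<Sum>h\<in>Fz. B h - A h \<bullet> y) = 0"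
      using s2 by linarith+
    then have z1: "(\<Sum>\<rho>\<in>R. ca \<rho> \<bullet> y + cb \<rho> - f y) = 0" using k0 by simp
    have all1: "\<forall>\<rho>\<in>R. ca \<rho> \<bullet> y + cb \<rho> - f y = 0"
      using sum_nonneg_eq_0_iff[OF fR, of "\<lambda>\<rho>. ca \<rho> \<bullet> y + cb \<rho> - f y"] t1 z1 by simp
    have all2: "\<forall>h\<in>Fz. B h - A h \<bullet> y = 0"
      using sum_nonneg_eq_0_iff[OF fFz, of "\<lambda>h. B h - A h \<bullet> y"] t2 z2 by simp
    have inR: "y \<in> \<rho>" if rR: "\<rho> \<in> R" for \<rho>
    proof (rule ccontr)
      assume yr: "y \<notin> \<rho>"
      have rP: "\<rho> \<in> PP" "aff_dim \<rho> = int DIM('a)" using rR unfolding R_def by auto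
      have "f y < ca \<rho> \<bullet> y + cb \<rho>" by (rule stepA[OF rP(1) rP(2) cab[OF rP(1)] yD yr])
      moreover have "ca \<rho> \<bullet> y + cb \<rho> - f y = 0" using all1 rR by blast
      ultimately show False by simp
    qed
    have actF: "A h \<bullet> y = B h" if "h \<in> Fz" for h
      using all2 that by simp
    define O1 where "O1 = (\<Inter>h\<in>F - Fz. {w. A h \<bullet> w < B h})"
    have oO1: "open O1" unfolding O1_def using F(1) by (intro open_INT) (auto simp: open_halfspace_lt)
    have zD: "z \<in> D" using zt tD by blast
    have zO1: "z \<in> O1" unfolding O1_def
    proof (rule INT_I)
      fix h assume h: "h \<in> F - Fz"
      then have "A h \<bullet> z \<le> B h" using zD Dmem by blast
      moreover have "A h \<bullet> z \<noteq> B h" using h unfolding Fz_def by blast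
      ultimately show "z \<in> {w. A h \<bullet> w < B h}" by simp
    qed
    define Cz where "Cz = \<Union>{\<rho>\<in>PP. z \<notin> \<rho>}"
    have cCz: "closed Cz" unfolding Cz_def using finPP cell(3) by auto
    have "open (O1 \<inter> - Cz)" using oO1 cCz by (simp add: open_Int open_Compl)
    moreover have "z \<in> O1 \<inter> - Cz" using zO1 unfolding Cz_def by auto
    ultimately obtain e where e: "e > 0" "ball z e \<subseteq> O1 \<inter> - Cz" using open_contains_ball by blast
    obtain \<delta> where d: "\<delta> > 0" "\<delta> * norm (z - y) < e" using small_step[OF e(1)] by blast
    define w where "w = z + \<delta> *\<^sub>R (z - y)"
    have "w \<in> ball z e" using d unfolding w_def by (simp add: dist_norm)
    then have "w \<in> O1 \<inter> - Cz" using e(2) by (rule subsetD[rotated])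
    then have wO: "w \<in> O1" "w \<notin> Cz" by auto
    have wD: "w \<in> D" unfolding Dmem
    proof
      fix h assume hF: "h \<in> F"
      show "A h \<bullet> w \<le> B h"
      proof (cases "h \<in> Fz")
        case True
        have "A h \<bullet> z = B h" using True unfolding Fz_def by blast
        then show ?thesis using Aw[of h \<delta> y] actF[OF True] unfolding w_def by simp
      next
        case False
        then have "h \<in> F - Fz" using hF by blast
        then have "w \<in> {w. A h \<bullet> w < B h}" using wO(1) unfolding O1_def by blast
        then show ?thesis by simp
      qed
    qed
    obtain \<rho>' where r': "\<rho>' \<in> PP" "aff_dim \<rho>' = int DIM('a)" "w \<in> \<rho>'" using coverage[OF wD] by blast
    have zr': "z \<in> \<rho>'"
    proof (rule ccontr)
      assume "z \<notin> \<rho>'"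
      then have "w \<in> Cz" using r'(1,3) unfolding Cz_def by blast
      then show False using wO(2) by simp
    qed
    have tr': "\<tau> \<subseteq> \<rho>'" using contain[OF tPP z r'(1) zr'] .
    then have "\<rho>' \<in> R" using r' unfolding R_def by blast
    then have yr': "y \<in> \<rho>'" using inR by blast
    have "\<rho>' \<inter> \<tau> = \<tau>" using tr' by blast
    then have tface: "\<tau> face_of \<rho>'" using int_cell(2)[OF r'(1) tPP] by simp
    have yz: "y \<noteq> z" using yt zt by blast
    have "z \<in> open_segment y w" unfolding w_def using extrapolate_seg[OF d(1) yz] .
    then have "y \<in> \<tau>" using face_ofD[OF tface _ yr' r'(3) zt] by simp
    then show False using yt by simp
  qed
  have "\<forall>x\<in>\<tau>. f x = a \<bullet> x + b" using eqT ell_eq by simp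
  moreover have "\<forall>x\<in>D - \<tau>. f x < a \<bullet> x + b" using ltT ell_eq by simp
  ultimately show ?thesis unfolding complex_of_def using tD by blast
qed

lemma sub_PP: assumes C: "C \<in> complex_of D f" shows "C \<in> PP"
proof -
  obtain a b where CD: "C \<subseteq> D" and ab1: "\<forall>x\<in>C. f x = a \<bullet> x + b" and ab2: "\<forall>x\<in>D - C. f x < a \<bullet> x + b"
    using C unfolding complex_of_def by blast
  have fle: "f y \<le> a \<bullet> y + b" if "y \<in> D" for y using ab1 ab2 that by (metis Diff_iff less_eq_real_def)
  show ?thesis
  proof (cases "C = {}")
    case True
    obtain y where "y \<in> D" using Dne by blast
    then obtain \<rho> where "\<rho> \<in> PP" using coverD by blast
    then show ?thesis using True face_cell[of \<rho> "{}"] by simp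
  next
    case False
    have convC: "convex C"
    proof (rule convexI)
      fix x1 x2 u v assume h: "x1 \<in> C" "x2 \<in> C" "0 \<le> u" "0 \<le> v" "u + (v::real) = 1"
      define w where "w = u *\<^sub>R x1 + v *\<^sub>R x2"
      have x12: "x1 \<in> D" "x2 \<in> D" using h CD by auto
      have wD: "w \<in> D" unfolding w_def using convexD[OF convD x12 h(3-5)] .
      have "u * f x1 + v * f x2 \<le> f w"
        using concave unfolding concave_on_iff w_def using x12 h(3-5) by blast
      moreover have "u * f x1 + v * f x2 = a \<bullet> w + b"
      proof -
        have bb: "u * b + v * b = b" using h(5) by (metis distrib_right mult_1)
        have "u * f x1 + v * f x2 = u * (a \<bullet> x1) + v * (a \<bullet> x2) + (u * b + v * b)"
          using ab1 h(1,2) by (simp add: algebra_simps)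
        also have "\<dots> = a \<bullet> w + b" unfolding bb w_def by (simp add: inner_add_right)
        finally show ?thesis .
      qed
      ultimately have "a \<bullet> w + b \<le> f w" by simp
      then show "u *\<^sub>R x1 + v *\<^sub>R x2 \<in> C" using ab2 wD unfolding w_def by force
    qed
    obtain z where z: "z \<in> rel_interior C" using False rel_interior_eq_empty convC by blast
    have zC: "z \<in> C" using z rel_interior_subset by blast
    obtain \<rho> where r: "\<rho> \<in> PP" "aff_dim \<rho> = int DIM('a)" "z \<in> \<rho>" using coverage zC CD by blast
    obtain ar br where abr: "\<forall>y\<in>\<rho>. f y = ar \<bullet> y + br" using coef[OF r(1)] by blast
    have Crho: "C \<subseteq> \<rho>"
    proof
      fix y assume yC: "y \<in> C"
      show "y \<in> \<rho>"
      proof (rule ccontr)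
        assume yr: "y \<notin> \<rho>"
        have yD: "y \<in> D" using yC CD by blast
        have lt: "a \<bullet> y + b < ar \<bullet> y + br" using stepA[OF r(1,2) abr yD yr] ab1 yC by simp
        have eqz: "a \<bullet> z + b = ar \<bullet> z + br" using ab1 abr zC r(3) by metis
        obtain \<delta> where d: "\<delta> > 0" "z + \<delta> *\<^sub>R (z - y) \<in> C" using extrapolate[OF z yC] by blast
        define w where "w = z + \<delta> *\<^sub>R (z - y)"
        have wD: "w \<in> D" using d CD unfolding w_def by blast
        have lin: "c \<bullet> w + e = (1 + \<delta>) * (c \<bullet> z + e) - \<delta> * (c \<bullet> y + e)" for c e
          unfolding w_def by (simp add: inner_add_right inner_diff_right algebra_simps)
        have "ar \<bullet> w + br < a \<bullet> w + b"
          using lin[of ar br] lin[of a b] eqz lt d(1) by (smt (verit) mult_strict_left_mono)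
        moreover have "f w = a \<bullet> w + b" using ab1 d(2) unfolding w_def by blast
        moreover have "f w \<le> ar \<bullet> w + br" using le_ncell[OF r(1,2) abr wD] .
        ultimately show False by simp
      qed
    qed
    have "C = \<rho> \<inter> {y. (ar - a) \<bullet> y = b - br}"
    proof
      show "C \<subseteq> \<rho> \<inter> {y. (ar - a) \<bullet> y = b - br}"
        using Crho ab1 abr by (force simp: inner_diff_left)
      show "\<rho> \<inter> {y. (ar - a) \<bullet> y = b - br} \<subseteq> C"
      proof
        fix y assume y: "y \<in> \<rho> \<inter> {y. (ar - a) \<bullet> y = b - br}"
        then have "f y = a \<bullet> y + b" using abr by (auto simp: inner_diff_left)
        moreover have "y \<in> D" using y cell(2)[OF r(1)] by blast
        ultimately show "y \<in> C" using ab2 by force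
      qed
    qed
    moreover have "(\<rho> \<inter> {y. (ar - a) \<bullet> y = b - br}) face_of \<rho>"
    proof (rule face_of_Int_supporting_hyperplane_le[OF cell(4)[OF r(1)]])
      fix y assume yr: "y \<in> \<rho>"
      then have "y \<in> D" using cell(2)[OF r(1)] by blast
      then have "f y \<le> a \<bullet> y + b" using fle by blast
      moreover have "f y = ar \<bullet> y + br" using abr yr by blast
      ultimately show "(ar - a) \<bullet> y \<le> b - br" by (simp add: inner_diff_left)
    qed
    ultimately show ?thesis using face_cell[OF r(1)] by simp
  qed
qed

lemma forward: "concave_on D f \<and> PP = complex_of D f"
  using concave PP_sub sub_PP by blast

end

lemma main_equiv:
  fixes D :: "'a::euclidean_space set" and PP :: "'a set set" and f :: "'a \<Rightarrow> real"
  assumes "polyhedron D" and "aff_dim D = int DIM('a)"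
    and "polyhedral_complex D PP"
    and "defined_on PP f"
  shows "strictly_concave PP (rel_interior D) f \<longleftrightarrow> concave_on D f \<and> PP = complex_of D f"
proof
  assume sc: "strictly_concave PP (rel_interior D) f"
  have "fwd D PP f" using assms sc by (intro fwd.intro)
  then show "concave_on D f \<and> PP = complex_of D f" by (rule fwd.forward)
next
  assume "concave_on D f \<and> PP = complex_of D f"
  then show "strictly_concave PP (rel_interior D) f" using backward assms(3,4) by blast
qed

theorem proposition4p19:
  fixes D :: "'a::euclidean_space set" and PP :: "'a set set" and f :: "'a \<Rightarrow> real"
  assumes "polyhedron D" and "aff_dim D = int DIM('a)"
    and "polyhedral_complex D PP"
    and "defined_on PP f"
  shows "(strictly_concave PP (rel_interior D) f \<longleftrightarrow> concave_on D f \<and> PP = complex_of D f)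
       \<and> (regular_on PP (rel_interior D) \<longleftrightarrow>
            (\<exists>g. piecewise_affine D g \<and> concave_on D g \<and> PP = complex_of D g))"
proof
  show "strictly_concave PP (rel_interior D) f \<longleftrightarrow> concave_on D f \<and> PP = complex_of D f"
    using main_equiv[OF assms] .
  show "regular_on PP (rel_interior D) \<longleftrightarrow>
            (\<exists>g. piecewise_affine D g \<and> concave_on D g \<and> PP = complex_of D g)"
  proof
    assume "regular_on PP (rel_interior D)"
    then obtain g where g: "strictly_concave PP (rel_interior D) g" unfolding regular_on_def by blast
    then have dg: "defined_on PP g" unfolding strictly_concave_def by blast
    have "concave_on D g \<and> PP = complex_of D g" using main_equiv[OF assms(1-3) dg] g by blast
    moreover have "piecewise_affine D g" unfolding piecewise_affine_def using assms(3) dg by blast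
    ultimately show "\<exists>g. piecewise_affine D g \<and> concave_on D g \<and> PP = complex_of D g" by blast
  next
    assume "\<exists>g. piecewise_affine D g \<and> concave_on D g \<and> PP = complex_of D g"
    then obtain g where g: "concave_on D g" "PP = complex_of D g" by blast
    have dg: "defined_on PP g" unfolding defined_on_def
    proof
      fix \<sigma> assume "\<sigma> \<in> PP"
      then have "\<sigma> \<in> complex_of D g" using g(2) by simp
      then show "\<exists>a b. \<forall>x\<in>\<sigma>. g x = a \<bullet> x + b" unfolding complex_of_def by blast
    qed
    have "strictly_concave PP (rel_interior D) g" using main_equiv[OF assms(1-3) dg] g by blast
    then show "regular_on PP (rel_interior D)" unfolding regular_on_def by blast
  qed
qed

end
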